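(* Let $(V_1,\dots,V_n)$ and $(V_1',\dots,V_n')$ be $n$-tuples of doubly non-commuting isometries on Hilbert spaces $H$ and $H'$, with identical structure constants $z_{ij}$. Then the following are equivalent: (1) $(V_1,\dots,V_n)$ and $(V_1',\dots,V_n')$ are unitarily equivalent; (2) for every $A\subseteq\{1,\dots,n\}$, the $A$-wandering data $\mathcal D_A$ of $(V_1,\dots,V_n)$ and the $A$-wandering data $\mathcal D_A'$ of $(V_1',\dots,V_n')$ are unitarily equivalent.
   Context: Fix $n\ge1$ and $z_{ij}\in\mathbb T$ ($i\ne j$) with $z_{ji}=\overline{z_{ij}}$. An $n$-tuple of isometries $(V_1,\dots,V_n)$ on $H$ is doubly non-commuting if $V_i^*V_j=\overline{z_{ij}}V_jV_i^*$ for $i\neq j$. For $A\subseteq\{1,\dots,n\}$ with $A^c=\{j_1<\dots<j_m\}$, the $A$-wandering subspace is $W_A=\bigcap_{(m_j)\in\mathbb N_0^{A^c}}\big(\prod_{j\in A^c}V_j^{m_j}\big)\big(\bigcap_{i\in A}\ker V_i^*\big)$ (empty intersection of kernels $=H$, empty product $=$ identity); it reduces each $V_j$, $j\in A^c$, and the $A$-wandering data are the tuple $\mathcal D_A=(\mathbf 1_{W_A},V_{j_1}|_{W_A},\dots,V_{j_m}|_{W_A})$. Tuples $(T_1,\dots,T_r)$ on $K$ and $(T_1',\dots,T_r')$ on $K'$ are unitarily equivalent if there is a unitary $\varphi:K\to K'$ with $\varphi T_i=T_i'\varphi$ for all $i$. *)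

theory Defs
  imports "HOL-Analysis.Analysis"
begin

text \<open>A complex Hilbert space is encoded (equivalently) as a real Hilbert space
  (real inner product space, complete) together with an orthogonal complex
  structure \<open>imult\<close> (multiplication by the imaginary unit) with imult o imult = -id.\<close>

class complex_hilbert_space = real_inner + complete_space +
  fixes imult :: "'a \<Rightarrow> 'a"
  assumes imult_add: "imult (x + y) = imult x + imult y"
    and imult_scaleR: "imult (scaleR r x) = scaleR r (imult x)"
    and imult_imult: "imult (imult x) = - x"
    and inner_imult: "inner (imult x) (imult y) = inner x y"

definition scaleC :: "complex \<Rightarrow> 'a::complex_hilbert_space \<Rightarrow> 'a" where
  "scaleC c x = scaleR (Re c) x + scaleR (Im c) (imult x)"

text \<open>Complex inner product (linear in the first, conjugate-linear in the second argument);
  its real part is the real inner product and cinner x x = (norm x)^2.\<close>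
definition cinner :: "'a::complex_hilbert_space \<Rightarrow> 'a \<Rightarrow> complex" where
  "cinner x y = Complex (inner x y) (inner x (imult y))"

definition clinear_op :: "('a::complex_hilbert_space \<Rightarrow> 'b::complex_hilbert_space) \<Rightarrow> bool" where
  "clinear_op T \<longleftrightarrow> (\<forall>x y. T (x + y) = T x + T y) \<and> (\<forall>c x. T (scaleC c x) = scaleC c (T x))"

text \<open>Hilbert space adjoint (exists and is unique for bounded linear operators).\<close>
definition cadjoint :: "('a::complex_hilbert_space \<Rightarrow> 'a) \<Rightarrow> ('a \<Rightarrow> 'a)" where
  "cadjoint T = (SOME S. \<forall>x y. cinner (T x) y = cinner x (S y))"

definition isometry_op :: "('a::complex_hilbert_space \<Rightarrow> 'a) \<Rightarrow> bool" where
  "isometry_op V \<longleftrightarrow> clinear_op V \<and> (\<forall>x. norm (V x) = norm x)"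

definition doubly_noncommuting ::
  "nat \<Rightarrow> (nat \<Rightarrow> nat \<Rightarrow> complex) \<Rightarrow> (nat \<Rightarrow> 'a::complex_hilbert_space \<Rightarrow> 'a) \<Rightarrow> bool" where
  "doubly_noncommuting n z V \<longleftrightarrow>
     (\<forall>i\<in>{1..n}. isometry_op (V i)) \<and>
     (\<forall>i\<in>{1..n}. \<forall>j\<in>{1..n}. i \<noteq> j \<longrightarrow>
        (\<forall>x. cadjoint (V i) (V j x) = scaleC (cnj (z i j)) (V j (cadjoint (V i) x))))"

definition ordered_power_product ::
  "(nat \<Rightarrow> 'a \<Rightarrow> 'a) \<Rightarrow> nat set \<Rightarrow> (nat \<Rightarrow> nat) \<Rightarrow> ('a \<Rightarrow> 'a)" where
  "ordered_power_product V J m = foldr (\<lambda>j f. (V j ^^ m j) \<circ> f) (sorted_list_of_set J) id"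

definition wandering_subspace ::
  "nat \<Rightarrow> (nat \<Rightarrow> 'a::complex_hilbert_space \<Rightarrow> 'a) \<Rightarrow> nat set \<Rightarrow> 'a set" where
  "wandering_subspace n V A =
     (\<Inter>m \<in> {m. \<forall>j. j \<notin> {1..n} - A \<longrightarrow> m j = 0}.
        ordered_power_product V ({1..n} - A) m ` (\<Inter>i\<in>A. {x. cadjoint (V i) x = 0}))"

text \<open>A-wandering data: the tuple (identity, V_j for j in the complement of A), indexed by
  None (identity) and Some j (j in the complement), to be considered on the wandering subspace.\<close>
definition wandering_data ::
  "(nat \<Rightarrow> 'a \<Rightarrow> 'a) \<Rightarrow> nat option \<Rightarrow> 'a \<Rightarrow> 'a" where
  "wandering_data V k = (case k of None \<Rightarrow> id | Some j \<Rightarrow> V j)"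

definition wandering_index :: "nat \<Rightarrow> nat set \<Rightarrow> nat option set" where
  "wandering_index n A = insert None (Some ` ({1..n} - A))"

definition unitarily_equivalent ::
  "'a::complex_hilbert_space set \<Rightarrow> 'b::complex_hilbert_space set \<Rightarrow> 'i set \<Rightarrow>
   ('i \<Rightarrow> 'a \<Rightarrow> 'a) \<Rightarrow> ('i \<Rightarrow> 'b \<Rightarrow> 'b) \<Rightarrow> bool" where
  "unitarily_equivalent K K' I T T' \<longleftrightarrow>
    (\<exists>\<phi>. bij_betw \<phi> K K' \<and>
        (\<forall>x\<in>K. \<forall>y\<in>K. \<phi> (x + y) = \<phi> x + \<phi> y) \<and>
        (\<forall>c. \<forall>x\<in>K. \<phi> (scaleC c x) = scaleC c (\<phi> x)) \<and>
        (\<forall>x\<in>K. \<forall>y\<in>K. cinner (\<phi> x) (\<phi> y) = cinner x y) \<and>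
        (\<forall>k\<in>I. \<forall>x\<in>K. \<phi> (T k x) = T' k (\<phi> x)))"

end

theory Submission
  imports Defs "HOL-Library.Multiset"
begin


context fixes dummy :: "'a::complex_hilbert_space" begin end

lemma imult_zero[simp]: "imult (0::'a::complex_hilbert_space) = 0"
  by (metis add_cancel_right_right imult_add)
lemma imult_minus: "imult (- x::'a::complex_hilbert_space) = - imult x"
  by (metis add.right_inverse add_eq_0_iff imult_add imult_zero)
lemma imult_diff: "imult (x - y::'a::complex_hilbert_space) = imult x - imult y"
  by (metis diff_conv_add_uminus imult_add imult_minus)
lemma norm_imult[simp]: "norm (imult (x::'a::complex_hilbert_space)) = norm x"
  by (metis inner_imult norm_eq_sqrt_inner)
lemma inner_imult_right: "inner x (imult (y::'a::complex_hilbert_space)) = - inner (imult x) y"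
  by (metis imult_imult inner_imult inner_minus_right)
lemma inner_imult_self[simp]: "inner x (imult (x::'a::complex_hilbert_space)) = 0"
  using inner_imult_right[of x x] by (simp add: inner_commute)
lemma bounded_linear_imult: "bounded_linear (imult :: 'a::complex_hilbert_space \<Rightarrow> 'a)"
  by (rule bounded_linear_intro[where K=1]) (auto simp: imult_add imult_scaleR)

lemma scaleC_add_left: "scaleC (a + b) x = scaleC a x + scaleC b (x::'a::complex_hilbert_space)"
  by (simp add: scaleC_def scaleR_add_left algebra_simps)
lemma scaleC_add_right: "scaleC a (x + y) = scaleC a x + scaleC a (y::'a::complex_hilbert_space)"
  by (simp add: scaleC_def scaleR_add_right imult_add algebra_simps)
lemma scaleC_mult: "scaleC (a * b) x = scaleC a (scaleC b (x::'a::complex_hilbert_space))"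
  by (simp add: scaleC_def imult_add imult_scaleR imult_imult algebra_simps)
lemma scaleC_one[simp]: "scaleC 1 x = (x::'a::complex_hilbert_space)"
  by (simp add: scaleC_def)
lemma scaleC_zero_left[simp]: "scaleC 0 x = (0::'a::complex_hilbert_space)"
  by (simp add: scaleC_def)
lemma scaleC_zero_right[simp]: "scaleC c 0 = (0::'a::complex_hilbert_space)"
  by (simp add: scaleC_def)
lemma scaleC_of_real: "scaleC (complex_of_real r) x = scaleR r (x::'a::complex_hilbert_space)"
  by (simp add: scaleC_def)
lemma scaleC_ii: "scaleC \<i> x = imult (x::'a::complex_hilbert_space)"
  by (simp add: scaleC_def)
lemma imult_scaleC: "imult (scaleC c x) = scaleC c (imult (x::'a::complex_hilbert_space))"
  by (simp add: scaleC_def imult_add imult_scaleR imult_imult algebra_simps)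
lemma scaleC_minus_right: "scaleC c (- x) = - scaleC c (x::'a::complex_hilbert_space)"
  by (simp add: scaleC_def imult_minus)
lemma scaleC_diff_right: "scaleC c (x - y) = scaleC c x - scaleC c (y::'a::complex_hilbert_space)"
  by (simp add: scaleC_def imult_diff algebra_simps)
lemma scaleC_minus_left: "scaleC (- c) x = - scaleC c (x::'a::complex_hilbert_space)"
  by (simp add: scaleC_def)
lemma scaleC_diff_left: "scaleC (a - b) x = scaleC a x - scaleC b (x::'a::complex_hilbert_space)"
  by (simp add: scaleC_def algebra_simps)
lemma scaleC_sum_right: "scaleC c (sum f S) = (\<Sum>i\<in>S. scaleC c (f i::'a::complex_hilbert_space))"
  by (induction S rule: infinite_finite_induct) (auto simp: scaleC_add_right)

lemma cinner_add_left: "cinner (x + y) z = cinner x z + cinner y (z::'a::complex_hilbert_space)"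
  by (simp add: cinner_def inner_add_left complex_eq_iff)
lemma cinner_add_right: "cinner x (y + z) = cinner x y + cinner x (z::'a::complex_hilbert_space)"
  by (simp add: cinner_def inner_add_right imult_add complex_eq_iff)
lemma cinner_imult_left: "cinner (imult x) y = \<i> * cinner x (y::'a::complex_hilbert_space)"
  by (simp add: cinner_def inner_imult complex_eq_iff inner_imult_right imult_imult)
lemma cinner_imult_right: "cinner x (imult y) = - \<i> * cinner x (y::'a::complex_hilbert_space)"
  by (simp add: cinner_def imult_imult complex_eq_iff inner_imult_right)
lemma cinner_scaleR_left: "cinner (scaleR r x) y = complex_of_real r * cinner x (y::'a::complex_hilbert_space)"
  by (simp add: cinner_def complex_eq_iff)
lemma cinner_scaleR_right: "cinner x (scaleR r y) = complex_of_real r * cinner x (y::'a::complex_hilbert_space)"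
  by (simp add: cinner_def complex_eq_iff imult_scaleR)
lemma cinner_scaleC_left: "cinner (scaleC c x) y = c * cinner x (y::'a::complex_hilbert_space)"
  apply (simp add: scaleC_def cinner_add_left cinner_scaleR_left cinner_imult_left)
  by (simp add: complex_eq_iff algebra_simps)
lemma cinner_scaleC_right: "cinner x (scaleC c y) = cnj c * cinner x (y::'a::complex_hilbert_space)"
  apply (simp add: scaleC_def cinner_add_right cinner_scaleR_right cinner_scaleR_left cinner_imult_right imult_scaleR)
  by (simp add: complex_eq_iff algebra_simps)
lemma cinner_commute: "cinner y x = cnj (cinner x (y::'a::complex_hilbert_space))"
proof -
  have "inner y (imult x) = - inner x (imult y)"
    using inner_imult_right[of y x] inner_imult_right[of x y] by (simp add: inner_commute)
  then show ?thesis by (simp add: cinner_def complex_eq_iff inner_commute)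
qed
lemma cinner_zero_left[simp]: "cinner 0 (y::'a::complex_hilbert_space) = 0"
  by (simp add: cinner_def complex_eq_iff)
lemma cinner_zero_right[simp]: "cinner x (0::'a::complex_hilbert_space) = 0"
  by (simp add: cinner_def complex_eq_iff)
lemma cinner_minus_left: "cinner (- x) y = - cinner x (y::'a::complex_hilbert_space)"
  by (simp add: cinner_def complex_eq_iff)
lemma cinner_minus_right: "cinner x (- y) = - cinner x (y::'a::complex_hilbert_space)"
  by (simp add: cinner_def complex_eq_iff imult_minus)
lemma cinner_diff_left: "cinner (x - y) z = cinner x z - cinner y (z::'a::complex_hilbert_space)"
  by (simp add: cinner_def complex_eq_iff inner_diff_left)
lemma cinner_diff_right: "cinner x (y - z) = cinner x y - cinner x (z::'a::complex_hilbert_space)"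
  by (simp add: cinner_def complex_eq_iff inner_diff_right imult_diff)
lemma cinner_self: "cinner x (x::'a::complex_hilbert_space) = complex_of_real ((norm x)\<^sup>2)"
  by (simp add: cinner_def complex_eq_iff power2_norm_eq_inner)
lemma Re_cinner: "Re (cinner x y) = inner x (y::'a::complex_hilbert_space)"
  by (simp add: cinner_def)
lemma cinner_self_eq_0[simp]: "cinner x x = 0 \<longleftrightarrow> x = (0::'a::complex_hilbert_space)"
  by (simp add: cinner_self)
lemma cinner_ext: "(\<And>u. cinner u a = cinner u (b::'a::complex_hilbert_space)) \<Longrightarrow> a = b"
proof -
  assume h: "\<And>u. cinner u a = cinner u b"
  have "cinner (a - b) (a - b) = 0" using h[of "a - b"] by (simp add: cinner_diff_right)
  then show "a = b" by simp
qed
lemma cinner_ext_left: "(\<And>u. cinner a u = cinner (b::'a::complex_hilbert_space) u) \<Longrightarrow> a = b"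
proof -
  assume h: "\<And>u. cinner a u = cinner b u"
  have "cinner (a - b) (a - b) = 0" using h[of "a - b"] by (simp add: cinner_diff_left)
  then show "a = b" by simp
qed

lemma continuous_scaleC: "continuous_on S (\<lambda>x. scaleC c (f x::'a::complex_hilbert_space))" if "continuous_on S f"
  unfolding scaleC_def
  by (intro continuous_intros bounded_linear.continuous_on[OF bounded_linear_imult] that)

lemma norm_scaleC: "norm (scaleC c (x::'a::complex_hilbert_space)) = cmod c * norm x"
proof -
  have "(norm (scaleC c x))\<^sup>2 = Re (cinner (scaleC c x) (scaleC c x))"
    by (simp add: cinner_self)
  also have "cinner (scaleC c x) (scaleC c x) = (c * cnj c) * cinner x x"
    by (simp add: cinner_scaleC_left cinner_scaleC_right)
  also have "Re ((c * cnj c) * cinner x x) = (cmod c * norm x)\<^sup>2"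
    by (simp add: cinner_self power_mult_distrib flip: complex_norm_square of_real_mult)
  finally show ?thesis
    by (simp add: power2_eq_imp_eq)
qed


lemma clinear_zero: "clinear_op T \<Longrightarrow> T 0 = 0"
  unfolding clinear_op_def by (metis scaleC_zero_left)
lemma clinear_add: "clinear_op T \<Longrightarrow> T (x + y) = T x + T y"
  unfolding clinear_op_def by blast
lemma clinear_scaleC: "clinear_op T \<Longrightarrow> T (scaleC c x) = scaleC c (T x)"
  unfolding clinear_op_def by blast
lemma clinear_minus: "clinear_op T \<Longrightarrow> T (- x) = - T x"
  using clinear_scaleC[of T "-1" x] by (simp add: scaleC_minus_left)
lemma clinear_diff: "clinear_op T \<Longrightarrow> T (x - y) = T x - T y"
  using clinear_add[of T x "- y"] clinear_minus[of T y] by simp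
lemma clinear_scaleR: "clinear_op T \<Longrightarrow> T (scaleR r x) = scaleR r (T x)"
  using clinear_scaleC[of T "complex_of_real r" x] by (simp add: scaleC_of_real)
lemma clinear_imult: "clinear_op T \<Longrightarrow> T (imult x) = imult (T x)"
  using clinear_scaleC[of T "\<i>" x] by (simp add: scaleC_ii)
lemma clinear_comp: "clinear_op S \<Longrightarrow> clinear_op T \<Longrightarrow> clinear_op (S \<circ> T)"
  unfolding clinear_op_def by simp
lemma clinear_id: "clinear_op id"
  unfolding clinear_op_def by simp
lemma clinear_bounded: "clinear_op T \<Longrightarrow> (\<And>x. norm (T x) \<le> K * norm x) \<Longrightarrow> bounded_linear T"
  by (rule bounded_linear_intro[where K=K]) (auto simp: clinear_add clinear_scaleR mult.commute)

lemma isometry_clinear: "isometry_op V \<Longrightarrow> clinear_op V"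
  unfolding isometry_op_def by blast
lemma isometry_norm: "isometry_op V \<Longrightarrow> norm (V x) = norm x"
  unfolding isometry_op_def by blast
lemma isometry_bounded: "isometry_op V \<Longrightarrow> bounded_linear V"
  by (rule clinear_bounded[where K=1]) (auto simp: isometry_op_def)
lemma isometry_cont: "isometry_op V \<Longrightarrow> continuous_on S V"
  by (simp add: isometry_bounded linear_continuous_on)
lemma isometry_comp: "isometry_op S \<Longrightarrow> isometry_op T \<Longrightarrow> isometry_op (S \<circ> T)"
  unfolding isometry_op_def by (simp add: clinear_comp)
lemma isometry_id: "isometry_op id"
  unfolding isometry_op_def by (simp add: clinear_id)
lemma isometry_pow: "isometry_op V \<Longrightarrow> isometry_op (V ^^ k)"
  by (induction k) (auto simp: isometry_id isometry_comp)

lemma isometry_inner: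
  assumes "isometry_op V" shows "inner (V x) (V y) = inner x y"
proof -
  have l: "clinear_op V" using assms by (rule isometry_clinear)
  have "(norm (V (x + y)))\<^sup>2 = (norm (x + y))\<^sup>2" using assms by (simp add: isometry_norm)
  then have "(norm (V x + V y))\<^sup>2 = (norm (x + y))\<^sup>2" by (simp add: clinear_add[OF l])
  then have "inner (V x + V y) (V x + V y) = inner (x + y) (x + y)"
    by (simp add: power2_norm_eq_inner)
  moreover have "inner (V x) (V x) = inner x x" "inner (V y) (V y) = inner y y"
    using assms by (simp_all add: isometry_norm flip: power2_norm_eq_inner)
  ultimately show ?thesis by (simp add: inner_add_left inner_add_right inner_commute)
qed

lemma isometry_cinner:
  assumes "isometry_op V" shows "cinner (V x) (V y) = cinner x y"
  using isometry_inner[OF assms, of x y] isometry_inner[OF assms, of x "imult y"]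
  by (simp add: cinner_def clinear_imult[OF isometry_clinear[OF assms]])

lemma isometry_range_closed:
  assumes V: "isometry_op V" shows "closed (range V)"
proof (rule closed_sequential_limits[THEN iffD2], intro allI impI, elim conjE)
  fix s l assume s: "\<forall>n. s n \<in> range V" and lim: "s \<longlonglongrightarrow> l"
  have "\<forall>n. \<exists>u. s n = V u" using s by blast
  then obtain t where t: "\<And>n. s n = V (t n)" by metis
  have "Cauchy s" using lim by (rule LIMSEQ_imp_Cauchy)
  moreover have "dist (t a) (t b) = dist (s a) (s b)" for a b
    by (simp add: t dist_norm isometry_norm[OF V] flip: clinear_diff[OF isometry_clinear[OF V]])
  ultimately have "Cauchy t"
    unfolding Cauchy_def by simp
  then obtain u where u: "t \<longlonglongrightarrow> u" using Cauchy_convergent_iff convergent_def by blast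
  have "(\<lambda>n. V (t n)) \<longlonglongrightarrow> V u"
    using u by (intro bounded_linear.tendsto[OF isometry_bounded[OF V]])
  moreover have "(\<lambda>n. V (t n)) = s" using t by auto
  ultimately have "l = V u" using lim by (metis LIMSEQ_unique)
  then show "l \<in> range V" by simp
qed

section \<open>Projection theorem\<close>

definition csub :: "'a::complex_hilbert_space set \<Rightarrow> bool" where
  "csub M \<longleftrightarrow> (\<forall>x\<in>M. \<forall>y\<in>M. x + y \<in> M) \<and> (\<forall>c. \<forall>x\<in>M. scaleC c x \<in> M)"

lemma csub_add: "csub M \<Longrightarrow> x \<in> M \<Longrightarrow> y \<in> M \<Longrightarrow> x + y \<in> M"
  unfolding csub_def by blast
lemma csub_scaleC: "csub M \<Longrightarrow> x \<in> M \<Longrightarrow> scaleC c x \<in> M"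
  unfolding csub_def by blast
lemma csub_scaleR: "csub M \<Longrightarrow> x \<in> M \<Longrightarrow> scaleR r x \<in> M"
  using csub_scaleC[of M x "complex_of_real r"] by (simp add: scaleC_of_real)
lemma csub_zero: "csub M \<Longrightarrow> x \<in> M \<Longrightarrow> 0 \<in> M"
  using csub_scaleC[of M x 0] by simp
lemma csub_minus: "csub M \<Longrightarrow> x \<in> M \<Longrightarrow> - x \<in> M"
  using csub_scaleR[of M x "-1"] by simp
lemma csub_diff: "csub M \<Longrightarrow> x \<in> M \<Longrightarrow> y \<in> M \<Longrightarrow> x - y \<in> M"
  using csub_add[of M x "- y"] csub_minus[of M y] by simp
lemma csub_imult: "csub M \<Longrightarrow> x \<in> M \<Longrightarrow> imult x \<in> M"
  using csub_scaleC[of M x "\<i>"] by (simp add: scaleC_ii)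
lemma csub_sum: "csub M \<Longrightarrow> x0 \<in> M \<Longrightarrow> (\<And>i. i \<in> S \<Longrightarrow> f i \<in> M) \<Longrightarrow> sum f S \<in> M"
  by (induction S rule: infinite_finite_induct) (auto intro: csub_add csub_zero)

lemma parallelogram:
  "(norm (a - b))\<^sup>2 = 2 * (norm a)\<^sup>2 + 2 * (norm b)\<^sup>2 - (norm (a + b))\<^sup>2" for a b :: "'a::real_inner"
  by (simp add: power2_norm_eq_inner inner_add_left inner_add_right inner_diff_left inner_diff_right inner_commute)

lemma infdist_approx:
  assumes "A \<noteq> {}" "e > 0" shows "\<exists>a\<in>A. dist x a < infdist x A + e"
proof (rule ccontr)
  assume "\<not> ?thesis"
  then have "\<forall>a\<in>A. infdist x A + e \<le> dist x a" by auto
  then have "infdist x A + e \<le> infdist x A"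
    unfolding infdist_notempty[OF assms(1)] by (intro cINF_greatest assms(1)) auto
  then show False using assms by simp
qed

lemma projection_exists:
  fixes M :: "'a::complex_hilbert_space set"
  assumes M: "closed M" "csub M" "M \<noteq> {}"
  shows "\<exists>p\<in>M. \<forall>m\<in>M. cinner (x - p) m = 0"
proof -
  define d where "d = infdist x M"
  have d0: "d \<ge> 0" by (simp add: d_def infdist_nonneg)
  have "\<forall>k. \<exists>a\<in>M. dist x a < d + 1 / (Suc k)"
    using infdist_approx[OF M(3)] d_def by simp
  then obtain m where mM: "\<And>k. m k \<in> M" and md: "\<And>k. dist x (m k) < d + 1 / Suc k" by metis
  have dle: "d \<le> dist x a" if "a \<in> M" for a using that d_def infdist_le by auto
  have key: "(norm (m k - m l))\<^sup>2 \<le> 4 * (2 * d + 1) * (1 / Suc N)" if "k \<ge> N" "l \<ge> N" for k l N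
  proof -
    define a where "a = x - m k"
    define b where "b = x - m l"
    have mid: "scaleR (1/2) (m k + m l) \<in> M" using M mM by (intro csub_scaleR csub_add) auto
    have "a + b = scaleR 2 (x - scaleR (1/2) (m k + m l))"
      by (simp add: a_def b_def algebra_simps scaleR_2)
    then have "norm (a + b) = 2 * dist x (scaleR (1/2) (m k + m l))"
      by (simp add: dist_norm)
    then have nab: "norm (a + b) \<ge> 2 * d" using dle[OF mid] by simp
    have ek: "1 / real (Suc k) \<le> 1 / Suc N" "1 / real (Suc l) \<le> 1 / Suc N"
      using that by (auto simp: frac_le)
    define e where "e = 1 / real (Suc N)"
    have e01: "0 < e" "e \<le> 1" by (auto simp: e_def)
    have na: "norm a \<le> d + e" "norm b \<le> d + e"
      using md[of k] md[of l] ek by (auto simp: a_def b_def dist_norm e_def)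
    have "a - b = m l - m k" by (simp add: a_def b_def)
    then have "(norm (m k - m l))\<^sup>2 = 2 * (norm a)\<^sup>2 + 2 * (norm b)\<^sup>2 - (norm (a + b))\<^sup>2"
      using parallelogram[of a b] by (simp add: norm_minus_commute)
    also have "\<dots> \<le> 2 * (d + e)\<^sup>2 + 2 * (d + e)\<^sup>2 - (2 * d)\<^sup>2"
      using na nab d0 by (intro diff_mono add_mono mult_left_mono power_mono) auto
    also have "\<dots> = 4 * e * (2 * d + e)" by (simp add: power2_eq_square algebra_simps)
    also have "\<dots> \<le> 4 * e * (2 * d + 1)" using e01 by (intro mult_left_mono) auto
    finally show ?thesis by (simp add: e_def)
  qed
  have "Cauchy m"
  proof (rule metric_CauchyI)
    fix \<epsilon> :: real assume "\<epsilon> > 0"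
    obtain N where N: "4 * (2 * d + 1) / \<epsilon>\<^sup>2 < real (Suc N)"
    proof -
      obtain N where "4 * (2 * d + 1) / \<epsilon>\<^sup>2 < real N" using reals_Archimedean2 by blast
      then show ?thesis by (intro that[of N]) simp
    qed
    have pos: "4 * (2 * d + 1) > 0" using d0 by simp
    have "4 * (2 * d + 1) * (1 / Suc N) < \<epsilon>\<^sup>2"
      using N \<open>\<epsilon> > 0\<close> by (simp add: field_simps)
    then have "\<forall>k\<ge>N. \<forall>l\<ge>N. (norm (m k - m l))\<^sup>2 < \<epsilon>\<^sup>2"
      using key[of N] by (intro allI impI) (rule le_less_trans, assumption+)
    then have "\<forall>k\<ge>N. \<forall>l\<ge>N. dist (m k) (m l) < \<epsilon>"
    proof (intro allI impI)
      fix k l assume "\<forall>k\<ge>N. \<forall>l\<ge>N. (norm (m k - m l))\<^sup>2 < \<epsilon>\<^sup>2" "k \<ge> N" "l \<ge> N"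
      then have "(norm (m k - m l))\<^sup>2 < \<epsilon>\<^sup>2" by blast
      from power_less_imp_less_base[OF this] \<open>\<epsilon> > 0\<close> show "dist (m k) (m l) < \<epsilon>"
        by (simp add: dist_norm)
    qed
    then show "\<exists>N. \<forall>k\<ge>N. \<forall>l\<ge>N. dist (m k) (m l) < \<epsilon>" by blast
  qed
  then obtain p where p: "m \<longlonglongrightarrow> p" using Cauchy_convergent_iff convergent_def by blast
  have pM: "p \<in> M" using M(1) mM p closed_sequentially by blast
  have dp: "dist x p \<le> d"
  proof -
    have "(\<lambda>k. dist x (m k)) \<longlonglongrightarrow> dist x p" using p by (intro tendsto_intros)
    moreover have "(\<lambda>k. d + 1 / Suc k) \<longlonglongrightarrow> d + 0"
      by (intro tendsto_intros LIMSEQ_Suc[OF lim_inverse_n'[unfolded inverse_eq_divide]])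
    ultimately show ?thesis using md by (intro LIMSEQ_le[where X="\<lambda>k. dist x (m k)" and Y="\<lambda>k. d + 1 / Suc k"]) (auto intro: less_imp_le)
  qed
  have orth: "inner (x - p) u = 0" if uM: "u \<in> M" for u
  proof -
    define a where "a = inner (x - p) u"
    define b where "b = inner u u"
    have ineq: "0 \<le> t\<^sup>2 * b - 2 * t * a" for t
    proof -
      have "p + scaleR t u \<in> M" using M pM uM by (intro csub_add csub_scaleR)
      then have "d \<le> norm (x - p - scaleR t u)" using dle by (simp add: dist_norm algebra_simps)
      then have "norm (x - p) \<le> norm (x - p - scaleR t u)" using dp by (simp add: dist_norm)
      then have "(norm (x - p))\<^sup>2 \<le> (norm (x - p - scaleR t u))\<^sup>2" by (simp add: power_mono)
      then have "inner (x - p) (x - p) \<le> inner (x - p - scaleR t u) (x - p - scaleR t u)"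
        by (simp only: power2_norm_eq_inner)
      also have "inner (x - p - scaleR t u) (x - p - scaleR t u) = inner (x - p) (x - p) - 2 * t * a + t\<^sup>2 * b"
        unfolding a_def b_def inner_diff_left inner_diff_right inner_scaleR_left inner_scaleR_right
        by (simp add: inner_commute[of u "x - p"] inner_commute[of u p] inner_commute[of u x] inner_diff_left power2_eq_square algebra_simps)
      finally show ?thesis by simp
    qed
    show ?thesis
    proof (cases "b = 0")
      case True
      then have "u = 0" by (simp add: b_def)
      then show ?thesis by simp
    next
      case False
      then have bpos: "b > 0" by (simp add: b_def)
      have "0 \<le> (a / b)\<^sup>2 * b - 2 * (a / b) * a" by (rule ineq)
      also have "\<dots> = - (a\<^sup>2 / b)" using bpos by (simp add: power2_eq_square field_simps)
      finally have "a\<^sup>2 / b \<le> 0" by linarith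
      then have "a\<^sup>2 \<le> 0" using bpos by (simp add: divide_le_0_iff)
      then show ?thesis by (simp add: a_def)
    qed
  qed
  have "cinner (x - p) u = 0" if "u \<in> M" for u
    using orth[OF that] orth[OF csub_imult[OF M(2) that]] by (simp add: cinner_def complex_eq_iff)
  then show ?thesis using pM by blast
qed

section \<open>Adjoints of isometries\<close>

lemma isometry_adjoint_exists:
  fixes V :: "'a::complex_hilbert_space \<Rightarrow> 'a"
  assumes V: "isometry_op V"
  shows "\<exists>S. \<forall>x y. cinner (V x) y = cinner x (S y)"
proof -
  have l: "clinear_op V" using V by (rule isometry_clinear)
  have M: "closed (range V)" "csub (range V)" "range V \<noteq> {}"
    using isometry_range_closed[OF V]
    by (auto simp: csub_def clinear_add[OF l, symmetric] clinear_scaleC[OF l, symmetric])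
  have "\<forall>y. \<exists>s. \<forall>m\<in>range V. cinner (y - V s) m = 0"
    using projection_exists[OF M] by blast
  then obtain S where S: "\<And>y m. m \<in> range V \<Longrightarrow> cinner (y - V (S y)) m = 0" by metis
  have "cinner (V x) y = cinner x (S y)" for x y
  proof -
    have "cinner (V x) (y - V (S y)) = 0"
      using S[of "V x" y] by (subst cinner_commute) simp
    then have "cinner (V x) y = cinner (V x) (V (S y))" by (simp add: cinner_diff_right)
    then show ?thesis by (simp add: isometry_cinner[OF V])
  qed
  then show ?thesis by blast
qed

lemma cadjoint_iso:
  assumes "isometry_op V" shows "cinner (V x) y = cinner x (cadjoint V y)"
proof -
  have "\<forall>x y. cinner (V x) y = cinner x (cadjoint V y)"
    unfolding cadjoint_def by (rule someI_ex[OF isometry_adjoint_exists[OF assms]])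
  then show ?thesis by blast
qed

lemma cadjoint_iso': "isometry_op V \<Longrightarrow> cinner y (V x) = cinner (cadjoint V y) x"
  using cadjoint_iso[of V x y] cinner_commute[of y "V x"] cinner_commute[of "cadjoint V y" x] by simp

lemma cadjoint_left_inv: "isometry_op V \<Longrightarrow> cadjoint V (V x) = x"
  by (rule cinner_ext) (simp add: cadjoint_iso[symmetric] isometry_cinner)

lemma cadjoint_add: "isometry_op V \<Longrightarrow> cadjoint V (x + y) = cadjoint V x + cadjoint V y"
  by (rule cinner_ext) (simp add: cadjoint_iso[symmetric] cinner_add_right)
lemma cadjoint_scaleC: "isometry_op V \<Longrightarrow> cadjoint V (scaleC c x) = scaleC c (cadjoint V x)"
  by (rule cinner_ext) (simp add: cadjoint_iso[symmetric] cinner_scaleC_right)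
lemma cadjoint_clinear: "isometry_op V \<Longrightarrow> clinear_op (cadjoint V)"
  by (simp add: clinear_op_def cadjoint_add cadjoint_scaleC)

lemma cadjoint_norm: assumes V: "isometry_op V" shows "norm (cadjoint V y) \<le> norm y"
proof -
  have "(norm (cadjoint V y))\<^sup>2 = Re (cinner (cadjoint V y) (cadjoint V y))" by (simp add: cinner_self)
  also have "\<dots> = Re (cinner (V (cadjoint V y)) y)" by (simp add: cadjoint_iso[OF V])
  also have "\<dots> = inner (V (cadjoint V y)) y" by (simp add: Re_cinner)
  also have "\<dots> \<le> norm (V (cadjoint V y)) * norm y" by (rule norm_cauchy_schwarz)
  also have "\<dots> = norm (cadjoint V y) * norm y" by (simp add: isometry_norm[OF V])
  finally have "(norm (cadjoint V y))\<^sup>2 \<le> norm (cadjoint V y) * norm y" .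
  then show ?thesis
    by (cases "norm (cadjoint V y) = 0") (auto simp: power2_eq_square)
qed

lemma cadjoint_bounded: "isometry_op V \<Longrightarrow> bounded_linear (cadjoint V)"
  by (rule clinear_bounded[where K=1]) (auto simp: cadjoint_clinear cadjoint_norm)
lemma cadjoint_cont: "isometry_op V \<Longrightarrow> continuous_on S (cadjoint V)"
  by (simp add: cadjoint_bounded linear_continuous_on)
lemma cadjoint_zero: "isometry_op V \<Longrightarrow> cadjoint V 0 = 0"
  by (simp add: cadjoint_clinear clinear_zero)
lemma cadjoint_diff: "isometry_op V \<Longrightarrow> cadjoint V (x - y) = cadjoint V x - cadjoint V y"
  by (simp add: cadjoint_clinear clinear_diff)


lemma commute_pow:
  fixes A B :: "'a::complex_hilbert_space \<Rightarrow> 'a"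
  assumes "clinear_op B" "\<And>x. A (B x) = scaleC c (B (A x))"
  shows "A ((B ^^ r) x) = scaleC (c ^ r) ((B ^^ r) (A x))"
proof (induction r)
  case 0 then show ?case by simp
next
  case (Suc r)
  have "A ((B ^^ Suc r) x) = A (B ((B ^^ r) x))" by simp
  also have "\<dots> = scaleC c (B (scaleC (c ^ r) ((B ^^ r) (A x))))" using assms(2) Suc by simp
  also have "\<dots> = scaleC (c ^ Suc r) ((B ^^ Suc r) (A x))"
    by (simp add: clinear_scaleC[OF assms(1)] scaleC_mult[symmetric] mult.commute)
  finally show ?case .
qed

lemma clinear_pow: "clinear_op (T::'a::complex_hilbert_space \<Rightarrow> 'a) \<Longrightarrow> clinear_op (T ^^ k)"
  by (induction k) (auto simp: clinear_op_def)

lemma clinear_sum: "clinear_op (T::'a::complex_hilbert_space \<Rightarrow> 'b::complex_hilbert_space) \<Longrightarrow> T (sum f S) = (\<Sum>i\<in>S. T (f i))"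
  by (induction S rule: infinite_finite_induct) (auto simp: clinear_zero clinear_add)

fun wapp :: "(nat \<Rightarrow> 'a \<Rightarrow> 'a) \<Rightarrow> nat list \<Rightarrow> 'a \<Rightarrow> 'a" where
  "wapp V [] x = x"
| "wapp V (l # ls) x = V l (wapp V ls x)"

lemma wapp_append: "wapp V (ls @ ms) x = wapp V ls (wapp V ms x)"
  by (induction ls) auto

lemma wapp_replicate: "wapp V (replicate r i) x = (V i ^^ r) x"
  by (induction r) auto

fun ins :: "(nat \<Rightarrow> nat \<Rightarrow> complex) \<Rightarrow> nat \<Rightarrow> nat list \<Rightarrow> complex \<times> nat list" where
  "ins z l [] = (1, [l])"
| "ins z l (m # ms) = (if l \<le> m then (1, l # m # ms)
     else (z l m * fst (ins z l ms), m # snd (ins z l ms)))"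

fun nf :: "(nat \<Rightarrow> nat \<Rightarrow> complex) \<Rightarrow> nat list \<Rightarrow> complex \<times> nat list" where
  "nf z [] = (1, [])"
| "nf z (l # ls) = (fst (nf z ls) * fst (ins z l (snd (nf z ls))), snd (ins z l (snd (nf z ls))))"

lemma ins_snd: "snd (ins z l ms) = insort l ms"
  by (induction ms) auto
lemma ins_set: "set (snd (ins z l ms)) = insert l (set ms)"
  by (simp add: ins_snd set_insort_key)
lemma nf_snd: "snd (nf z ls) = sort ls"
  by (induction ls) (auto simp: ins_snd)
lemma nf_set: "set (snd (nf z ls)) = set ls"
  by (simp add: nf_snd)

definition cw :: "(nat \<Rightarrow> nat \<Rightarrow> complex) \<Rightarrow> nat \<Rightarrow> nat list \<Rightarrow> complex" where
  "cw z j ls = prod_list (map (z j) ls)"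

section \<open>A doubly non-commuting tuple\<close>

locale dnc =
  fixes n :: nat and z :: "nat \<Rightarrow> nat \<Rightarrow> complex" and V :: "nat \<Rightarrow> 'a::complex_hilbert_space \<Rightarrow> 'a"
  assumes zc: "\<forall>i\<in>{1..n}. \<forall>j\<in>{1..n}. i \<noteq> j \<longrightarrow> cmod (z i j) = 1 \<and> z j i = cnj (z i j)"
    and dn: "doubly_noncommuting n z V"
begin

abbreviation "I \<equiv> {1..n}"
abbreviation "Vs i \<equiv> cadjoint (V i)"

lemma iso: "i \<in> I \<Longrightarrow> isometry_op (V i)"
  using dn by (simp add: doubly_noncommuting_def)
lemma lin: "i \<in> I \<Longrightarrow> clinear_op (V i)"
  using iso isometry_clinear by blast
lemma slin: "i \<in> I \<Longrightarrow> clinear_op (Vs i)"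
  using iso cadjoint_clinear by blast

lemma R1: "i \<in> I \<Longrightarrow> j \<in> I \<Longrightarrow> i \<noteq> j \<Longrightarrow> Vs i (V j x) = scaleC (cnj (z i j)) (V j (Vs i x))"
  using dn by (simp add: doubly_noncommuting_def)

lemma z_mod: "i \<in> I \<Longrightarrow> j \<in> I \<Longrightarrow> i \<noteq> j \<Longrightarrow> cmod (z i j) = 1"
  using zc by blast
lemma z_sym: "i \<in> I \<Longrightarrow> j \<in> I \<Longrightarrow> i \<noteq> j \<Longrightarrow> z j i = cnj (z i j)"
  using zc by blast
lemma z_cnj: "i \<in> I \<Longrightarrow> j \<in> I \<Longrightarrow> i \<noteq> j \<Longrightarrow> z i j * cnj (z i j) = 1"
  using z_mod by (metis complex_norm_square of_real_1 power_one)

lemma R2: assumes ij: "i \<in> I" "j \<in> I" "i \<noteq> j"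
  shows "V i (V j x) = scaleC (z i j) (V j (V i x))"
proof -
  define D where "D = V i (V j x) - scaleC (z i j) (V j (V i x))"
  have a: "Vs i D = 0"
  proof -
    have "Vs i D = V j x - scaleC (z i j) (scaleC (cnj (z i j)) (V j x))"
      using ij by (simp add: D_def cadjoint_diff iso cadjoint_scaleC cadjoint_left_inv R1)
    also have "\<dots> = 0" using z_cnj[OF ij] by (simp add: scaleC_mult[symmetric])
    finally show ?thesis .
  qed
  have b: "Vs j D = 0"
  proof -
    have "Vs j D = scaleC (cnj (z j i)) (V i x) - scaleC (z i j) (V i x)"
      using ij by (simp add: D_def cadjoint_diff iso cadjoint_scaleC cadjoint_left_inv R1)
    also have "\<dots> = 0" using z_sym[OF ij] by simp
    finally show ?thesis .
  qed
  have "cinner D D = 0"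
  proof -
    have "cinner D D = cinner (V i (V j x)) D - cinner (scaleC (z i j) (V j (V i x))) D"
      by (simp add: D_def cinner_diff_left)
    also have "\<dots> = 0"
      using a b ij by (simp add: cinner_scaleC_left cadjoint_iso iso)
    finally show ?thesis .
  qed
  then show ?thesis by (simp add: D_def)
qed

lemma R3: assumes ij: "i \<in> I" "j \<in> I" "i \<noteq> j"
  shows "Vs i (Vs j x) = scaleC (cnj (z j i)) (Vs j (Vs i x))"
proof (rule cinner_ext)
  fix u
  have "cinner u (Vs i (Vs j x)) = cinner (V j (V i u)) x"
    using ij by (simp add: cadjoint_iso iso)
  also have "\<dots> = cinner (scaleC (z j i) (V i (V j u))) x"
    using R2[of j i u] ij by simp
  also have "\<dots> = cinner u (scaleC (cnj (z j i)) (Vs j (Vs i x)))"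
    using ij by (simp add: cinner_scaleC_left cinner_scaleC_right cadjoint_iso iso)
  finally show "cinner u (Vs i (Vs j x)) = cinner u (scaleC (cnj (z j i)) (Vs j (Vs i x)))" .
qed

lemma iso_pow: "i \<in> I \<Longrightarrow> isometry_op (V i ^^ r)"
  by (simp add: iso isometry_pow)

lemma range_pow_scaleC: "i \<in> I \<Longrightarrow> (V i ^^ r) y \<in> range (V i ^^ r) \<Longrightarrow> scaleC c ((V i ^^ r) y) \<in> range (V i ^^ r)"
  by (metis clinear_pow clinear_scaleC lin rangeI)

definition X :: "nat set \<Rightarrow> nat set \<Rightarrow> 'a set" where
  "X T A = {w. (\<forall>i\<in>A. Vs i w = 0) \<and> (\<forall>j\<in>T - A. \<forall>r. w \<in> range (V j ^^ r))}"

lemma V_pres_X: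
  assumes j: "j \<in> I" "j \<notin> A" and T: "T \<subseteq> I" "A \<subseteq> T" and w: "w \<in> X T A"
  shows "V j w \<in> X T A"
  unfolding X_def
proof (intro CollectI conjI ballI allI)
  fix i assume i: "i \<in> A"
  then have "i \<noteq> j" "i \<in> I" using j T by auto
  then show "Vs i (V j w) = 0" using w i j by (simp add: X_def R1 clinear_zero[OF lin])
next
  fix l r assume l: "l \<in> T - A"
  then have "w \<in> range (V l ^^ r)" using w by (auto simp: X_def)
  then obtain y where y: "w = (V l ^^ r) y" by blast
  show "V j w \<in> range (V l ^^ r)"
  proof (cases "l = j")
    case True
    then show ?thesis using y by (simp add: funpow_swap1)
  next
    case False
    have "V j w = scaleC (z j l ^ r) ((V l ^^ r) (V j y))"
      unfolding y using l T j False by (intro commute_pow lin R2) auto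
    also have "\<dots> = (V l ^^ r) (scaleC (z j l ^ r) (V j y))"
      using l T by (simp add: clinear_scaleC[OF clinear_pow[OF lin]] subset_iff)
    finally show ?thesis by simp
  qed
qed

lemma Vs_pres_X:
  assumes j: "j \<in> I" "j \<notin> A" and T: "T \<subseteq> I" "A \<subseteq> T" and w: "w \<in> X T A"
  shows "Vs j w \<in> X T A"
  unfolding X_def
proof (intro CollectI conjI ballI allI)
  fix i assume i: "i \<in> A"
  then have "i \<noteq> j" "i \<in> I" using j T by auto
  then show "Vs i (Vs j w) = 0" using w i j by (simp add: X_def R3 clinear_zero[OF slin])
next
  fix l r assume l: "l \<in> T - A"
  show "Vs j w \<in> range (V l ^^ r)"
  proof (cases "l = j")
    case True
    have "w \<in> range (V l ^^ Suc r)" using w l unfolding X_def by blast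
    then obtain y where y: "w = (V l ^^ Suc r) y" by blast
    then have "Vs j w = (V l ^^ r) y" using True j by (simp add: cadjoint_left_inv iso)
    then show ?thesis by simp
  next
    case False
    have "w \<in> range (V l ^^ r)" using w l by (auto simp: X_def)
    then obtain y where y: "w = (V l ^^ r) y" by blast
    have "Vs j w = scaleC (cnj (z j l) ^ r) ((V l ^^ r) (Vs j y))"
      unfolding y using l T j False by (intro commute_pow lin R1) auto
    also have "\<dots> = (V l ^^ r) (scaleC (cnj (z j l) ^ r) (Vs j y))"
      using l T by (simp add: clinear_scaleC[OF clinear_pow[OF lin]] subset_iff)
    finally show ?thesis by simp
  qed
qed

lemma X_add: assumes "T \<subseteq> I" "A \<subseteq> T" "x \<in> X T A" "y \<in> X T A" shows "x + y \<in> X T A"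
proof -
  have "Vs i (x + y) = 0" if "i \<in> A" for i
    using that assms by (auto simp: X_def clinear_add[OF slin])
  moreover have "x + y \<in> range (V j ^^ r)" if jr: "j \<in> T - A" for j r
  proof -
    have "x \<in> range (V j ^^ r)" "y \<in> range (V j ^^ r)" using assms jr by (auto simp: X_def)
    then obtain a b where "x = (V j ^^ r) a" "y = (V j ^^ r) b" by blast
    then have "x + y = (V j ^^ r) (a + b)" using jr assms by (simp add: clinear_add[OF clinear_pow[OF lin]] subset_iff)
    then show ?thesis by simp
  qed
  ultimately show ?thesis by (auto simp: X_def)
qed

lemma X_scaleC: assumes "T \<subseteq> I" "A \<subseteq> T" "x \<in> X T A" shows "scaleC c x \<in> X T A"
proof -
  have "Vs i (scaleC c x) = 0" if "i \<in> A" for i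
    using that assms by (auto simp: X_def clinear_scaleC[OF slin])
  moreover have "scaleC c x \<in> range (V j ^^ r)" if jr: "j \<in> T - A" for j r
  proof -
    have "x \<in> range (V j ^^ r)" using assms jr by (auto simp: X_def)
    then obtain a where "x = (V j ^^ r) a" by blast
    then have "scaleC c x = (V j ^^ r) (scaleC c a)" using jr assms by (simp add: clinear_scaleC[OF clinear_pow[OF lin]] subset_iff)
    then show ?thesis by simp
  qed
  ultimately show ?thesis by (auto simp: X_def)
qed

lemma X_csub: assumes "T \<subseteq> I" "A \<subseteq> T" shows "csub (X T A)"
  using X_add[OF assms] X_scaleC[OF assms] by (auto simp: csub_def)

lemma X_closed: assumes "T \<subseteq> I" "A \<subseteq> T" shows "closed (X T A)"
proof -
  have "X T A = (\<Inter>i\<in>A. {w. Vs i w = 0}) \<inter> (\<Inter>j\<in>T - A. \<Inter>r. range (V j ^^ r))"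
    by (auto simp: X_def)
  moreover have "closed {w. Vs i w = 0}" if "i \<in> A" for i
    using that assms by (intro closed_Collect_eq cadjoint_cont iso continuous_on_const) auto
  moreover have "closed (range (V j ^^ r))" if "j \<in> T - A" for j r
    using that assms by (intro isometry_range_closed iso_pow) auto
  ultimately show ?thesis by (auto intro!: closed_Int closed_INT)
qed

end


context dnc begin

lemma wapp_add: "set ls \<subseteq> I \<Longrightarrow> wapp V ls (x + y) = wapp V ls x + wapp V ls y"
  by (induction ls) (auto simp: clinear_add[OF lin])
lemma wapp_scaleC: "set ls \<subseteq> I \<Longrightarrow> wapp V ls (scaleC c x) = scaleC c (wapp V ls x)"
  by (induction ls) (auto simp: clinear_scaleC[OF lin])
lemma wapp_norm: "set ls \<subseteq> I \<Longrightarrow> norm (wapp V ls x) = norm x"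
  by (induction ls) (auto simp: isometry_norm[OF iso])
lemma wapp_iso: "set ls \<subseteq> I \<Longrightarrow> isometry_op (wapp V ls)"
  by (simp add: isometry_op_def clinear_op_def wapp_add wapp_scaleC wapp_norm)
lemma wapp_cinner: "set ls \<subseteq> I \<Longrightarrow> cinner (wapp V ls x) (wapp V ls y) = cinner x y"
  using isometry_cinner[OF wapp_iso] by blast

lemma wapp_commute:
  assumes "j \<in> I" "set ls \<subseteq> I" "j \<notin> set ls"
  shows "V j (wapp V ls x) = scaleC (cw z j ls) (wapp V ls (V j x))"
  using assms
proof (induction ls)
  case Nil then show ?case by (simp add: cw_def)
next
  case (Cons l ls)
  have "V j (wapp V (l # ls) x) = scaleC (z j l) (V l (V j (wapp V ls x)))"
    using Cons.prems R2[of j l "wapp V ls x"] by simp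
  also have "\<dots> = scaleC (z j l) (V l (scaleC (cw z j ls) (wapp V ls (V j x))))"
    using Cons by simp
  also have "\<dots> = scaleC (cw z j (l # ls)) (wapp V (l # ls) (V j x))"
    using Cons.prems by (simp add: clinear_scaleC[OF lin] scaleC_mult[symmetric] cw_def)
  finally show ?case .
qed

lemma ins_wapp:
  assumes "l \<in> I" "set ms \<subseteq> I"
  shows "V l (wapp V ms x) = scaleC (fst (ins z l ms)) (wapp V (snd (ins z l ms)) x)"
  using assms
proof (induction ms)
  case Nil then show ?case by simp
next
  case (Cons m ms)
  show ?case
  proof (cases "l \<le> m")
    case True then show ?thesis by simp
  next
    case False
    have "V l (wapp V (m # ms) x) = scaleC (z l m) (V m (V l (wapp V ms x)))"
      using Cons.prems False R2[of l m "wapp V ms x"] by simp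
    also have "\<dots> = scaleC (z l m) (V m (scaleC (fst (ins z l ms)) (wapp V (snd (ins z l ms)) x)))"
      using Cons by simp
    also have "\<dots> = scaleC (fst (ins z l (m # ms))) (wapp V (snd (ins z l (m # ms))) x)"
      using Cons.prems False by (simp add: clinear_scaleC[OF lin] scaleC_mult[symmetric])
    finally show ?thesis .
  qed
qed

lemma wapp_nf: "set ls \<subseteq> I \<Longrightarrow> wapp V ls x = scaleC (fst (nf z ls)) (wapp V (snd (nf z ls)) x)"
proof (induction ls)
  case Nil then show ?case by simp
next
  case (Cons l ls)
  have s: "set (snd (nf z ls)) \<subseteq> I" using Cons.prems by (simp add: nf_set)
  have "wapp V (l # ls) x = V l (scaleC (fst (nf z ls)) (wapp V (snd (nf z ls)) x))"
    using Cons by simp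
  also have "\<dots> = scaleC (fst (nf z ls)) (V l (wapp V (snd (nf z ls)) x))"
    using Cons.prems by (simp add: clinear_scaleC[OF lin])
  also have "\<dots> = scaleC (fst (nf z (l # ls))) (wapp V (snd (nf z (l # ls))) x)"
    using Cons.prems s by (simp add: ins_wapp scaleC_mult[symmetric] Let_def)
  finally show ?case .
qed

lemma level:
  assumes "i \<in> I" "set ls \<subseteq> I" "Vs i u = 0"
  shows "\<exists>u'. Vs i u' = 0 \<and> wapp V ls u = (V i ^^ count_list ls i) u'"
  using assms
proof (induction ls)
  case Nil then show ?case by auto
next
  case (Cons l ls)
  then obtain u' where u': "Vs i u' = 0" "wapp V ls u = (V i ^^ count_list ls i) u'" by auto
  show ?case
  proof (cases "l = i")
    case True
    then show ?thesis using u' by auto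
  next
    case False
    have li: "l \<in> I" using Cons.prems by auto
    have "wapp V (l # ls) u = V l ((V i ^^ count_list ls i) u')" using u' by simp
    also have "\<dots> = scaleC (z l i ^ count_list ls i) ((V i ^^ count_list ls i) (V l u'))"
      using li Cons.prems False by (intro commute_pow lin R2) auto
    also have "\<dots> = (V i ^^ count_list ls i) (scaleC (z l i ^ count_list ls i) (V l u'))"
      using Cons.prems by (simp add: clinear_scaleC[OF clinear_pow[OF lin]])
    finally have e: "wapp V (l # ls) u = (V i ^^ count_list (l # ls) i) (scaleC (z l i ^ count_list ls i) (V l u'))"
      using False by simp
    have "Vs i (scaleC (z l i ^ count_list ls i) (V l u')) = 0"
      using li Cons.prems False u'(1) by (simp add: clinear_scaleC[OF slin] R1 clinear_zero[OF lin])
    then show ?thesis using e by blast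
  qed
qed

lemma range_pres:
  assumes "i \<in> I" "set ls \<subseteq> I" "i \<notin> set ls" "y \<in> range (V i ^^ s)"
  shows "wapp V ls y \<in> range (V i ^^ s)"
  using assms
proof (induction ls)
  case Nil then show ?case by simp
next
  case (Cons l ls)
  then obtain u where u: "wapp V ls y = (V i ^^ s) u" by auto
  have li: "l \<in> I" "l \<noteq> i" using Cons.prems by auto
  have "wapp V (l # ls) y = scaleC (z l i ^ s) ((V i ^^ s) (V l u))"
    using u li Cons.prems by (simp, intro commute_pow lin R2) auto
  also have "\<dots> = (V i ^^ s) (scaleC (z l i ^ s) (V l u))"
    using Cons.prems by (simp add: clinear_scaleC[OF clinear_pow[OF lin]])
  finally show ?case by simp
qed

lemma range_mono: "i \<in> I \<Longrightarrow> r \<le> s \<Longrightarrow> (V i ^^ s) u \<in> range (V i ^^ r)"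
proof -
  assume "r \<le> s"
  then have "(V i ^^ s) u = (V i ^^ r) ((V i ^^ (s - r)) u)"
    by (metis funpow_add le_add_diff_inverse o_apply)
  then show ?thesis by simp
qed

lemma orth_pow:
  assumes i: "i \<in> I" and u: "Vs i u = 0" and y: "y \<in> range (V i ^^ Suc r)"
  shows "cinner ((V i ^^ r) u) y = 0"
proof -
  obtain v where "y = (V i ^^ Suc r) v" using y by blast
  then have "y = (V i ^^ r) (V i v)" by (simp add: funpow_swap1)
  then have "cinner ((V i ^^ r) u) y = cinner u (V i v)"
    using isometry_cinner[OF iso_pow[OF i]] by simp
  also have "\<dots> = cinner (Vs i u) v" using cadjoint_iso'[OF iso[OF i]] by simp
  finally show ?thesis using u by simp
qed

lemma L1:
  assumes "i \<in> I" "Vs i w = 0" "set ls \<subseteq> I" "y \<in> range (V i ^^ Suc (count_list ls i))"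
  shows "cinner (wapp V ls w) y = 0"
proof -
  obtain u' where "Vs i u' = 0" "wapp V ls w = (V i ^^ count_list ls i) u'"
    using level[OF assms(1,3,2)] by blast
  then show ?thesis using orth_pow[OF assms(1)] assms(4) by simp
qed

lemma zero_case:
  assumes AB: "A \<subseteq> I" "B \<subseteq> I" and w: "w \<in> X I A" "w' \<in> X I B"
    and ls: "set ls \<subseteq> A" "set ls' \<subseteq> B"
    and c: "(\<exists>i\<in>A. i \<notin> B) \<or> (A = B \<and> (\<exists>i. count_list ls i < count_list ls' i))"
  shows "cinner (wapp V ls w) (wapp V ls' w') = 0"
  using c
proof
  assume "\<exists>i\<in>A. i \<notin> B"
  then obtain i where i: "i \<in> A" "i \<notin> B" by blast
  have iI: "i \<in> I" using i AB by auto
  have "w' \<in> range (V i ^^ Suc (count_list ls i))" using w i AB iI unfolding X_def by blast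
  then have "wapp V ls' w' \<in> range (V i ^^ Suc (count_list ls i))"
    using ls i AB by (intro range_pres iI) auto
  moreover have "Vs i w = 0" using w i by (auto simp: X_def)
  ultimately show ?thesis using ls AB by (intro L1[OF iI]) auto
next
  assume "A = B \<and> (\<exists>i. count_list ls i < count_list ls' i)"
  then obtain i where AB': "A = B" and i: "count_list ls i < count_list ls' i" by blast
  then have "i \<in> set ls'" by (metis count_notin less_nat_zero_code)
  then have iA: "i \<in> A" using ls AB' by auto
  have iI: "i \<in> I" using iA AB by auto
  have "Vs i w' = 0" "Vs i w = 0" using w iA AB' by (auto simp: X_def)
  then obtain u' where u': "wapp V ls' w' = (V i ^^ count_list ls' i) u'"
    using level[OF iI, of ls' w'] ls AB' AB by auto
  have "wapp V ls' w' \<in> range (V i ^^ Suc (count_list ls i))"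
    unfolding u' by (rule range_mono[OF iI]) (use i in auto)
  then show ?thesis using \<open>Vs i w = 0\<close> ls AB by (intro L1[OF iI]) auto
qed

lemma gram:
  assumes AB: "A \<subseteq> I" "B \<subseteq> I" and w: "w \<in> X I A" "w' \<in> X I B"
    and ls: "set ls \<subseteq> A" "set ls' \<subseteq> B"
  shows "cinner (wapp V ls w) (wapp V ls' w') =
    (if A = B \<and> mset ls = mset ls' then fst (nf z ls) * cnj (fst (nf z ls')) * cinner w w' else 0)"
proof (cases "A = B \<and> mset ls = mset ls'")
  case True
  have sI: "set ls \<subseteq> I" "set ls' \<subseteq> I" using ls AB by auto
  have srt: "sort ls' = sort ls" using True by (intro properties_for_sort) auto
  have "cinner (wapp V ls w) (wapp V ls' w') =
      cinner (scaleC (fst (nf z ls)) (wapp V (sort ls) w)) (scaleC (fst (nf z ls')) (wapp V (sort ls) w'))"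
    using wapp_nf[OF sI(1), of w] wapp_nf[OF sI(2), of w'] srt by (simp add: nf_snd)
  also have "\<dots> = fst (nf z ls) * cnj (fst (nf z ls')) * cinner w w'"
    using sI by (simp add: cinner_scaleC_left cinner_scaleC_right wapp_cinner)
  finally show ?thesis using True by simp
next
  case False
  have zc: "cinner (wapp V ls w) (wapp V ls' w') = 0"
    if "(\<exists>i\<in>A. i \<notin> B) \<or> (A = B \<and> (\<exists>i. count_list ls i < count_list ls' i))"
    using zero_case[OF AB w ls that] .
  have zc': "cinner (wapp V ls w) (wapp V ls' w') = 0"
    if "(\<exists>i\<in>B. i \<notin> A) \<or> (B = A \<and> (\<exists>i. count_list ls' i < count_list ls i))"
  proof -
    have "cinner (wapp V ls' w') (wapp V ls w) = 0"
      using zero_case[OF AB(2,1) w(2,1) ls(2,1) that] .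
    then show ?thesis using cinner_commute[of "wapp V ls w" "wapp V ls' w'"] by simp
  qed
  have "cinner (wapp V ls w) (wapp V ls' w') = 0"
  proof (cases "A = B")
    case False
    then have "(\<exists>i\<in>A. i \<notin> B) \<or> (\<exists>i\<in>B. i \<notin> A)" by blast
    then show ?thesis using zc zc' by blast
  next
    case True
    then have "mset ls \<noteq> mset ls'" using \<open>\<not> (A = B \<and> mset ls = mset ls')\<close> by blast
    then obtain i where "count_list ls i \<noteq> count_list ls' i"
      by (metis count_mset multiset_eqI)
    then have "count_list ls i < count_list ls' i \<or> count_list ls' i < count_list ls i" by linarith
    then show ?thesis using zc zc' True by blast
  qed
  then show ?thesis using False by (simp only: if_False)
qed

end


definition oppl :: "(nat \<Rightarrow> 'a \<Rightarrow> 'a) \<Rightarrow> (nat \<Rightarrow> nat) \<Rightarrow> nat list \<Rightarrow> 'a \<Rightarrow> 'a" where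
  "oppl V m L = foldr (\<lambda>j f. (V j ^^ m j) \<circ> f) L id"

lemma oppl_Nil: "oppl V m [] = id" by (simp add: oppl_def)
lemma oppl_Cons: "oppl V m (j # L) = (V j ^^ m j) \<circ> oppl V m L" by (simp add: oppl_def)
lemma opp_oppl: "ordered_power_product V J m = oppl V m (sorted_list_of_set J)"
  by (simp add: ordered_power_product_def oppl_def)

lemma opp_zero: "(\<forall>k\<in>set L. m k = 0) \<Longrightarrow> oppl V m L = id"
  by (induction L) (auto simp: oppl_Nil oppl_Cons)

lemma opp_single:
  assumes "distinct L" "j \<in> set L" "\<forall>k\<in>set L. k \<noteq> j \<longrightarrow> m k = 0"
  shows "oppl V m L = V j ^^ m j"
  using assms
proof (induction L)
  case Nil then show ?case by simp
next
  case (Cons a L)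
  show ?case
  proof (cases "a = j")
    case True
    then have "\<forall>k\<in>set L. m k = 0" using Cons.prems by auto
    then have z: "oppl V m L = id" by (rule opp_zero)
    show ?thesis by (simp add: oppl_Cons z True)
  next
    case False
    then have "m a = 0" using Cons.prems by auto
    then show ?thesis using Cons False by (simp add: oppl_Cons)
  qed
qed

context dnc begin

lemma pow_inv: "j \<in> I \<Longrightarrow> w \<in> range (V j ^^ r) \<Longrightarrow> (V j ^^ r) ((Vs j ^^ r) w) = w"
proof (induction r arbitrary: w)
  case 0 then show ?case by simp
next
  case (Suc r)
  then obtain y where y: "w = V j ((V j ^^ r) y)" by auto
  have vs: "Vs j w = (V j ^^ r) y" using y Suc.prems by (simp add: cadjoint_left_inv iso)
  have "(V j ^^ Suc r) ((Vs j ^^ Suc r) w) = V j ((V j ^^ r) ((Vs j ^^ r) (Vs j w)))"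
    by (simp add: funpow_swap1)
  also have "\<dots> = V j (Vs j w)" using Suc.IH[of "Vs j w"] Suc.prems vs by simp
  also have "\<dots> = w" using vs y by simp
  finally show ?case .
qed

lemma opp_X:
  assumes "set L \<subseteq> I - A" "A \<subseteq> I" "w \<in> X I A"
  shows "\<exists>y\<in>X I A. w = oppl V m L y"
  using assms
proof (induction L arbitrary: w)
  case Nil then show ?case by (auto simp: oppl_Nil)
next
  case (Cons j L)
  have j: "j \<in> I" "j \<notin> A" using Cons.prems by auto
  define u where "u = (Vs j ^^ m j) w"
  have uX: "(Vs j ^^ k) w \<in> X I A" for k
    by (induction k) (use Cons.prems j in \<open>auto intro: Vs_pres_X\<close>)
  then have uX': "u \<in> X I A" by (simp add: u_def)
  have "set L \<subseteq> I - A" using Cons.prems by auto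
  then obtain y where y: "y \<in> X I A" "u = oppl V m L y"
    using Cons.IH[OF _ Cons.prems(2) uX'] by blast
  have "w \<in> range (V j ^^ m j)" using Cons.prems j by (auto simp: X_def)
  then have "w = (V j ^^ m j) u" using pow_inv[OF j(1)] by (simp add: u_def)
  then show ?case using y by (auto simp: oppl_Cons)
qed

lemma wandering_eq:
  assumes A: "A \<subseteq> I"
  shows "wandering_subspace n V A = X I A"
proof
  define E where "E = (\<Inter>i\<in>A. {x. Vs i x = 0})"
  have L: "set (sorted_list_of_set (I - A)) = I - A" "distinct (sorted_list_of_set (I - A))" by auto
  show "wandering_subspace n V A \<subseteq> X I A"
  proof
    fix w assume w: "w \<in> wandering_subspace n V A"
    have m0: "w \<in> E"
    proof -
      have "w \<in> ordered_power_product V (I - A) (\<lambda>_. 0) ` E"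
        using w by (auto simp: wandering_subspace_def E_def)
      moreover have "ordered_power_product V (I - A) (\<lambda>_. 0) = id"
        unfolding opp_oppl by (rule opp_zero) simp
      ultimately show ?thesis by simp
    qed
    have "w \<in> range (V j ^^ r)" if j: "j \<in> I - A" for j r
    proof -
      define m where "m = (\<lambda>k. if k = j then r else 0)"
      have "w \<in> ordered_power_product V (I - A) m ` E"
        using w j by (auto simp: wandering_subspace_def E_def m_def)
      moreover have "ordered_power_product V (I - A) m = V j ^^ r"
        unfolding opp_oppl using L j
        by (subst opp_single[where j=j]) (auto simp: m_def)
      ultimately show ?thesis by auto
    qed
    then show "w \<in> X I A" using m0 by (auto simp: X_def E_def)
  qed
  show "X I A \<subseteq> wandering_subspace n V A"
  proof
    fix w assume w: "w \<in> X I A"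
    have "w \<in> ordered_power_product V (I - A) m ` E" for m
    proof -
      obtain y where "y \<in> X I A" "w = oppl V m (sorted_list_of_set (I - A)) y"
        using opp_X[OF _ A w, of "sorted_list_of_set (I - A)" m] L by auto
      moreover have "X I A \<subseteq> E" by (auto simp: X_def E_def)
      ultimately show ?thesis unfolding opp_oppl by auto
    qed
    then show "w \<in> wandering_subspace n V A"
      unfolding wandering_subspace_def E_def by auto
  qed
qed

end


definition cspan_cl :: "'a::complex_hilbert_space set \<Rightarrow> 'a set" where
  "cspan_cl S = \<Inter>{M. S \<subseteq> M \<and> closed M \<and> csub M}"

lemma cspan_cl_closed: "closed (cspan_cl S)"
  unfolding cspan_cl_def by (rule closed_Inter) blast
lemma cspan_cl_csub: "csub (cspan_cl S)"
  unfolding cspan_cl_def csub_def by blast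
lemma cspan_cl_sup: "S \<subseteq> cspan_cl S"
  unfolding cspan_cl_def by blast
lemma cspan_cl_min: "S \<subseteq> M \<Longrightarrow> closed M \<Longrightarrow> csub M \<Longrightarrow> cspan_cl S \<subseteq> M"
  unfolding cspan_cl_def by blast
lemma cspan_cl_mono: "S \<subseteq> T \<Longrightarrow> cspan_cl S \<subseteq> cspan_cl T"
  by (meson cspan_cl_closed cspan_cl_csub cspan_cl_min cspan_cl_sup order_trans)

context dnc begin

definition gen :: "nat set \<Rightarrow> 'a set" where
  "gen T = {wapp V ls y | A ls y. A \<subseteq> T \<and> set ls \<subseteq> A \<and> y \<in> X T A}"

lemma adj_pow: "i \<in> I \<Longrightarrow> cinner u ((V i ^^ k) v) = cinner ((Vs i ^^ k) u) v"
proof (induction k arbitrary: u)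
  case 0 then show ?case by simp
next
  case (Suc k)
  have "cinner u ((V i ^^ Suc k) v) = cinner (Vs i u) ((V i ^^ k) v)"
    using cadjoint_iso'[OF iso[OF Suc.prems]] by simp
  also have "\<dots> = cinner ((Vs i ^^ k) (Vs i u)) v" using Suc by simp
  finally show ?case by (simp add: funpow_swap1)
qed

lemma Vs_norm: "i \<in> I \<Longrightarrow> norm (Vs i x) \<le> norm x"
  using cadjoint_norm iso by blast

lemma Vs_pow_X: assumes "i \<in> I" "i \<notin> A" "T \<subseteq> I" "A \<subseteq> T" "y \<in> X T A" shows "(Vs i ^^ k) y \<in> X T A"
  by (induction k) (simp_all add: assms Vs_pres_X[OF assms(1-4)])
lemma V_pow_X: assumes "i \<in> I" "i \<notin> A" "T \<subseteq> I" "A \<subseteq> T" "y \<in> X T A" shows "(V i ^^ k) y \<in> X T A"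
  by (induction k) (simp_all add: assms V_pres_X[OF assms(1-4)])

lemma conv:
  assumes i: "i \<in> I" "i \<notin> T" and T: "T \<subseteq> I" "A \<subseteq> T" and y: "y \<in> X T A"
  shows "\<exists>yi. yi \<in> X (insert i T) A \<and> (\<lambda>m. (V i ^^ m) ((Vs i ^^ m) y)) \<longlonglongrightarrow> yi"
proof -
  define P where "P m = (V i ^^ m) ((Vs i ^^ m) y)" for m
  define a where "a m = (norm ((Vs i ^^ m) y))\<^sup>2" for m
  have iA: "i \<notin> A" using i T by auto
  have dec: "decseq a"
  proof (rule decseq_SucI)
    fix m
    have "norm ((Vs i ^^ Suc m) y) \<le> norm ((Vs i ^^ m) y)" using Vs_norm[OF i(1)] by simp
    then show "a (Suc m) \<le> a m" unfolding a_def by (intro power_mono) auto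
  qed
  have key: "(norm (P m - P m'))\<^sup>2 = a m - a m'" if "m \<le> m'" for m m'
  proof -
    define k where "k = m' - m"
    have m': "m' = m + k" using that by (simp add: k_def)
    have Pm': "P m' = (V i ^^ m) ((V i ^^ k) ((Vs i ^^ m') y))"
      by (simp add: P_def m' funpow_add)
    have "cinner (P m) (P m') = cinner ((V i ^^ m) ((Vs i ^^ m) y)) ((V i ^^ m) ((V i ^^ k) ((Vs i ^^ m') y)))"
      by (simp only: Pm') (simp add: P_def)
    also have "\<dots> = cinner ((Vs i ^^ m) y) ((V i ^^ k) ((Vs i ^^ m') y))"
      by (rule isometry_cinner[OF iso_pow[OF i(1)]])
    also have "\<dots> = cinner ((Vs i ^^ k) ((Vs i ^^ m) y)) ((Vs i ^^ m') y)"
      by (rule adj_pow[OF i(1)])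
    also have "(Vs i ^^ k) ((Vs i ^^ m) y) = (Vs i ^^ m') y"
      by (simp add: m' funpow_add add.commute)
    finally have c: "cinner (P m) (P m') = complex_of_real (a m')" by (simp add: cinner_self a_def)
    have nP: "(norm (P m))\<^sup>2 = a m" "(norm (P m'))\<^sup>2 = a m'"
      by (simp_all add: P_def a_def isometry_norm[OF iso_pow[OF i(1)]])
    have "(norm (P m - P m'))\<^sup>2 = Re (cinner (P m - P m') (P m - P m'))" by (simp add: cinner_self)
    also have "\<dots> = Re (cinner (P m) (P m)) - Re (cinner (P m) (P m')) - Re (cinner (P m') (P m)) + Re (cinner (P m') (P m'))"
      by (simp only: cinner_diff_left cinner_diff_right minus_complex.sel plus_complex.sel)
    also have "\<dots> = (norm (P m))\<^sup>2 - Re (cinner (P m) (P m')) - Re (cinner (P m') (P m)) + (norm (P m'))\<^sup>2"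
      by (simp only: cinner_self Re_complex_of_real)
    also have "\<dots> = a m - a m'"
      using c nP cinner_commute[of "P m'" "P m"] by simp
    finally show ?thesis .
  qed
  obtain L where "a \<longlonglongrightarrow> L" using decseq_convergent[OF dec, of 0] by (auto simp: a_def)
  then have ca: "Cauchy a" by (rule LIMSEQ_imp_Cauchy)
  have "Cauchy P"
  proof (rule metric_CauchyI)
    fix e :: real assume e: "e > 0"
    then have e2: "e\<^sup>2 > 0" by simp
    obtain N where N: "\<forall>m\<ge>N. \<forall>m'\<ge>N. dist (a m) (a m') < e\<^sup>2"
      using ca e2 unfolding Cauchy_def by blast
    have "dist (P m) (P m') < e" if mm: "m \<ge> N" "m' \<ge> N" for m m'
    proof -
      have d: "\<bar>a m - a m'\<bar> < e\<^sup>2" using N mm by (simp add: dist_real_def)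
      have sq: "(dist (P m) (P m'))\<^sup>2 < e\<^sup>2"
      proof (cases "m \<le> m'")
        case True
        have "(dist (P m) (P m'))\<^sup>2 = a m - a m'" using key[OF True] by (simp add: dist_norm)
        then show ?thesis using d by linarith
      next
        case False
        then have mm': "m' \<le> m" by simp
        have "(dist (P m) (P m'))\<^sup>2 = a m' - a m" using key[OF mm'] by (simp add: dist_norm norm_minus_commute)
        then show ?thesis using d by linarith
      qed
      show ?thesis using power_less_imp_less_base[OF sq] e by simp
    qed
    then show "\<exists>N. \<forall>m\<ge>N. \<forall>n\<ge>N. dist (P m) (P n) < e" by blast
  qed
  then obtain yi where lim: "P \<longlonglongrightarrow> yi" using Cauchy_convergent_iff convergent_def by blast
  have PX: "P m \<in> X T A" for m
    unfolding P_def using V_pow_X[OF i(1) iA T Vs_pow_X[OF i(1) iA T y]] .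
  have yX: "yi \<in> X T A"
    by (rule closed_sequentially[OF X_closed[OF T] PX lim])
  have yr: "yi \<in> range (V i ^^ r)" for r
  proof -
    have limr: "(\<lambda>m. P (m + r)) \<longlonglongrightarrow> yi" using lim by (rule LIMSEQ_ignore_initial_segment)
    have Pr: "P (m + r) \<in> range (V i ^^ r)" for m
      unfolding P_def by (rule range_mono[OF i(1)]) (rule le_add2)
    show ?thesis
      by (rule closed_sequentially[OF isometry_range_closed[OF iso_pow[OF i(1)]] Pr limr])
  qed
  have "yi \<in> X (insert i T) A"
    using yX yr by (auto simp: X_def)
  moreover have "P = (\<lambda>m. (V i ^^ m) ((Vs i ^^ m) y))" by (simp add: P_def fun_eq_iff)
  ultimately show ?thesis using lim by blast
qed

lemma decomp:
  assumes i: "i \<in> I"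
  shows "y = (V i ^^ m) ((Vs i ^^ m) y) + (\<Sum>r<m. (V i ^^ r) ((Vs i ^^ r) y - V i (Vs i ((Vs i ^^ r) y))))"
proof (induction m)
  case 0 then show ?case by simp
next
  case (Suc m)
  have "(V i ^^ m) ((Vs i ^^ m) y - V i (Vs i ((Vs i ^^ m) y))) =
        (V i ^^ m) ((Vs i ^^ m) y) - (V i ^^ Suc m) ((Vs i ^^ Suc m) y)"
    by (simp add: clinear_diff[OF clinear_pow[OF lin[OF i]]] funpow_swap1)
  then show ?case using Suc by (simp add: ac_simps)
qed

lemma Pi_X:
  assumes i: "i \<in> I" "i \<notin> T" and T: "T \<subseteq> I" "A \<subseteq> T" and v: "v \<in> X T A"
  shows "v - V i (Vs i v) \<in> X (insert i T) (insert i A)"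
proof -
  have iA: "i \<notin> A" using i T by auto
  have m: "v - V i (Vs i v) \<in> X T A"
    using v i T iA by (intro csub_diff[OF X_csub[OF T]] V_pres_X Vs_pres_X) auto
  have "Vs i (v - V i (Vs i v)) = 0"
    using i by (simp add: clinear_diff[OF slin] cadjoint_left_inv iso)
  then show ?thesis using m by (auto simp: X_def)
qed

lemma step:
  assumes i: "i \<in> I" "i \<notin> T" and T: "T \<subseteq> I" "A \<subseteq> T" and ls: "set ls \<subseteq> A" and y: "y \<in> X T A"
  shows "wapp V ls y \<in> cspan_cl (gen (insert i T))"
proof -
  define M where "M = cspan_cl (gen (insert i T))"
  have M: "closed M" "csub M" "gen (insert i T) \<subseteq> M"
    unfolding M_def by (auto simp: cspan_cl_closed cspan_cl_csub cspan_cl_sup)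
  have iA: "i \<notin> A" using i T by auto
  have lsI: "set ls \<subseteq> I" using ls T by auto
  obtain yi where yi: "yi \<in> X (insert i T) A" and lim: "(\<lambda>m. (V i ^^ m) ((Vs i ^^ m) y)) \<longlonglongrightarrow> yi"
    using conv[OF i T y] by blast
  define t where "t r = (Vs i ^^ r) y - V i (Vs i ((Vs i ^^ r) y))" for r
  have tX: "t r \<in> X (insert i T) (insert i A)" for r
    unfolding t_def using i T y iA by (intro Pi_X Vs_pow_X) auto
  have g0: "wapp V ls yi \<in> M"
    using M(3) yi ls T i unfolding gen_def by blast
  have gr: "wapp V ls ((V i ^^ r) (t r)) \<in> M" for r
  proof -
    have "wapp V ls ((V i ^^ r) (t r)) = wapp V (ls @ replicate r i) (t r)"
      by (simp add: wapp_append wapp_replicate)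
    moreover have "wapp V (ls @ replicate r i) (t r) \<in> gen (insert i T)"
      unfolding gen_def using tX[of r] ls T
      by (intro CollectI exI[of _ "insert i A"] exI[of _ "ls @ replicate r i"] exI[of _ "t r"]) auto
    ultimately show ?thesis using M(3) by auto
  qed
  define f where "f m = wapp V ls yi + (\<Sum>r<m. wapp V ls ((V i ^^ r) (t r)))" for m
  have fM: "f m \<in> M" for m
    unfolding f_def using M g0 gr by (intro csub_add csub_sum[OF M(2) g0]) auto
  have feq: "f m = wapp V ls yi + (wapp V ls y - wapp V ls ((V i ^^ m) ((Vs i ^^ m) y)))" for m
  proof -
    have d: "y = (V i ^^ m) ((Vs i ^^ m) y) + (\<Sum>r<m. (V i ^^ r) (t r))"
      unfolding t_def by (rule decomp[OF i(1)])
    have "wapp V ls y = wapp V ls ((V i ^^ m) ((Vs i ^^ m) y)) + wapp V ls (\<Sum>r<m. (V i ^^ r) (t r))"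
      by (rule trans[OF arg_cong[where f="wapp V ls", OF d] wapp_add[OF lsI]])
    also have "wapp V ls (\<Sum>r<m. (V i ^^ r) (t r)) = (\<Sum>r<m. wapp V ls ((V i ^^ r) (t r)))"
      by (rule clinear_sum[OF isometry_clinear[OF wapp_iso[OF lsI]]])
    finally have "wapp V ls y = wapp V ls ((V i ^^ m) ((Vs i ^^ m) y)) + (\<Sum>r<m. wapp V ls ((V i ^^ r) (t r)))" .
    then show ?thesis unfolding f_def by (simp add: algebra_simps)
  qed
  have "(\<lambda>m. wapp V ls ((V i ^^ m) ((Vs i ^^ m) y))) \<longlonglongrightarrow> wapp V ls yi"
    using lim by (intro bounded_linear.tendsto[OF isometry_bounded[OF wapp_iso[OF lsI]]])
  then have "f \<longlonglongrightarrow> wapp V ls yi + (wapp V ls y - wapp V ls yi)"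
    unfolding feq by (intro tendsto_intros)
  then have "f \<longlonglongrightarrow> wapp V ls y" by simp
  then have "wapp V ls y \<in> M" using closed_sequentially[of M f "wapp V ls y"] M(1) fM by blast
  then show ?thesis unfolding M_def .
qed

lemma dense_k: "k \<le> n \<Longrightarrow> cspan_cl (gen {1..k}) = UNIV"
proof (induction k)
  case 0
  have "y \<in> gen {1..0}" for y :: 'a
  proof -
    have "y \<in> X {1..0} {}" by (simp add: X_def)
    then have "wapp V [] y \<in> gen {1..0}" unfolding gen_def
      by (intro CollectI exI[of _ "{}"] exI[of _ "[]"] exI[of _ y]) simp
    then show ?thesis by simp
  qed
  then have "UNIV \<subseteq> gen {1..0}" by blast
  then show ?case using cspan_cl_sup[of "gen {1..0}"] by blast
next
  case (Suc k)
  have i: "Suc k \<in> I" "Suc k \<notin> {1..k}" using Suc.prems by auto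
  have T: "{1..k} \<subseteq> I" using Suc.prems by auto
  have ins: "insert (Suc k) {1..k} = {1..Suc k}" by auto
  have "gen {1..k} \<subseteq> cspan_cl (gen {1..Suc k})"
  proof
    fix x assume "x \<in> gen {1..k}"
    then obtain A ls y where x: "x = wapp V ls y" and h: "A \<subseteq> {1..k}" "set ls \<subseteq> A" "y \<in> X {1..k} A"
      unfolding gen_def by blast
    have "wapp V ls y \<in> cspan_cl (gen (insert (Suc k) {1..k}))" by (rule step[OF i T h])
    then show "x \<in> cspan_cl (gen {1..Suc k})" unfolding x ins .
  qed
  then have "cspan_cl (gen {1..k}) \<subseteq> cspan_cl (gen {1..Suc k})"
    by (intro cspan_cl_min cspan_cl_closed cspan_cl_csub)
  moreover have "cspan_cl (gen {1..k}) = UNIV" using Suc by simp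
  ultimately show ?case by blast
qed

lemma dense: "cspan_cl (gen I) = UNIV"
  using dense_k[of n] by simp

end


lemma tendsto_cinner:
  fixes f g :: "'x \<Rightarrow> 'a::complex_hilbert_space"
  assumes "(f \<longlongrightarrow> a) F" "(g \<longlongrightarrow> b) F"
  shows "((\<lambda>x. cinner (f x) (g x)) \<longlongrightarrow> cinner a b) F"
proof -
  have "((\<lambda>x. imult (g x)) \<longlongrightarrow> imult b) F"
    by (rule bounded_linear.tendsto[OF bounded_linear_imult assms(2)])
  then have "((\<lambda>x. Complex (inner (f x) (g x)) (inner (f x) (imult (g x)))) \<longlongrightarrow> Complex (inner a b) (inner a (imult b))) F"
    using assms by (intro tendsto_intros)
  then show ?thesis by (simp add: cinner_def)
qed

lemma bounded_linear_scaleC: "bounded_linear (\<lambda>x::'a::complex_hilbert_space. scaleC c x)"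
proof (rule bounded_linear_intro[where K="cmod c"])
  fix x y :: 'a and r :: real
  show "scaleC c (x + y) = scaleC c x + scaleC c y" by (rule scaleC_add_right)
  have "scaleC c (r *\<^sub>R x) = scaleC (c * complex_of_real r) x" by (simp add: scaleC_mult scaleC_of_real)
  also have "\<dots> = scaleC (complex_of_real r) (scaleC c x)" by (simp add: scaleC_mult[symmetric] mult.commute)
  finally show "scaleC c (r *\<^sub>R x) = r *\<^sub>R scaleC c x" by (simp add: scaleC_of_real)
  show "norm (scaleC c x) \<le> norm x * cmod c" by (simp add: norm_scaleC mult.commute)
qed

lemma tendsto_scaleC: "(f \<longlongrightarrow> a) F \<Longrightarrow> ((\<lambda>x. scaleC c (f x::'a::complex_hilbert_space)) \<longlongrightarrow> scaleC c a) F"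
  by (rule bounded_linear.tendsto[OF bounded_linear_scaleC])

lemma norm_eq_cinner: "cinner x x = cinner y y \<Longrightarrow> norm (x::'a::complex_hilbert_space) = norm (y::'b::complex_hilbert_space)"
proof -
  assume h: "cinner x x = cinner y y"
  have "complex_of_real ((norm x)\<^sup>2) = complex_of_real ((norm y)\<^sup>2)" using h by (simp only: cinner_self)
  then have "(norm x)\<^sup>2 = (norm y)\<^sup>2" by (simp only: of_real_eq_iff)
  then show ?thesis by (simp add: power2_eq_imp_eq)
qed

inductive_set Gam :: "'i set \<Rightarrow> ('i \<Rightarrow> 'a::complex_hilbert_space) \<Rightarrow> ('i \<Rightarrow> 'b::complex_hilbert_space) \<Rightarrow> ('a \<times> 'b) set"
  for J g g' where
  base: "a \<in> J \<Longrightarrow> (g a, g' a) \<in> Gam J g g'"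
| add: "p \<in> Gam J g g' \<Longrightarrow> q \<in> Gam J g g' \<Longrightarrow> (fst p + fst q, snd p + snd q) \<in> Gam J g g'"
| smul: "p \<in> Gam J g g' \<Longrightarrow> (scaleC c (fst p), scaleC c (snd p)) \<in> Gam J g g'"

lemma gam_inner:
  assumes gram: "\<And>a b. a \<in> J \<Longrightarrow> b \<in> J \<Longrightarrow> cinner (g a) (g b) = cinner (g' a) (g' b)"
    and p: "p \<in> Gam J g g'" and q: "q \<in> Gam J g g'"
  shows "cinner (fst p) (fst q) = cinner (snd p) (snd q)"
proof -
  have hbase: "cinner (g a) (fst q) = cinner (g' a) (snd q)" if a: "a \<in> J" for a
    using q
  proof (induction q rule: Gam.induct)
    case (base b) then show ?case using gram a by simp
  next
    case (add p q) then show ?case by (simp add: cinner_add_right)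
  next
    case (smul p c) then show ?case by (simp add: cinner_scaleC_right)
  qed
  show ?thesis using p
  proof (induction p rule: Gam.induct)
    case (base a) then show ?case using hbase by simp
  next
    case (add p q) then show ?case by (simp add: cinner_add_left)
  next
    case (smul p c) then show ?case by (simp add: cinner_scaleC_left)
  qed
qed

lemma ext_unitary:
  fixes g :: "'i \<Rightarrow> 'a::complex_hilbert_space" and g' :: "'i \<Rightarrow> 'b::complex_hilbert_space"
  assumes gram: "\<And>a b. a \<in> J \<Longrightarrow> b \<in> J \<Longrightarrow> cinner (g a) (g b) = cinner (g' a) (g' b)"
    and d1: "cspan_cl (g ` J) = UNIV" and d2: "cspan_cl (g' ` J) = UNIV"
  obtains \<phi> where "bij \<phi>" "\<And>x y. \<phi> (x + y) = \<phi> x + \<phi> y" "\<And>c x. \<phi> (scaleC c x) = scaleC c (\<phi> x)"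
    "\<And>x y. cinner (\<phi> x) (\<phi> y) = cinner x y" "\<And>a. a \<in> J \<Longrightarrow> \<phi> (g a) = g' a"
proof -
  define G where "G = closure (Gam J g g')"
  have Gcl: "closed G" by (simp add: G_def)
  have seq: "\<exists>s. (\<forall>k. s k \<in> Gam J g g') \<and> s \<longlonglongrightarrow> p" if "p \<in> G" for p
    using that unfolding G_def closure_sequential by blast
  have inG: "p \<in> G" if "\<And>k. s k \<in> Gam J g g'" "s \<longlonglongrightarrow> p" for s p
    unfolding G_def closure_sequential using that by blast
  have G1: "cinner (fst p) (fst q) = cinner (snd p) (snd q)" if pq: "p \<in> G" "q \<in> G" for p q
  proof -
    obtain s where s: "\<And>k. s k \<in> Gam J g g'" "s \<longlonglongrightarrow> p" using seq[OF pq(1)] by blast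
    obtain t where t: "\<And>k. t k \<in> Gam J g g'" "t \<longlonglongrightarrow> q" using seq[OF pq(2)] by blast
    have l1: "(\<lambda>k. cinner (fst (s k)) (fst (t k))) \<longlonglongrightarrow> cinner (fst p) (fst q)"
      using s t by (intro tendsto_cinner tendsto_fst)
    have l2: "(\<lambda>k. cinner (snd (s k)) (snd (t k))) \<longlonglongrightarrow> cinner (snd p) (snd q)"
      using s t by (intro tendsto_cinner tendsto_snd)
    have "(\<lambda>k. cinner (fst (s k)) (fst (t k))) = (\<lambda>k. cinner (snd (s k)) (snd (t k)))"
      using gam_inner[of J g g', OF gram s(1) t(1)] by auto
    then show ?thesis using l1 l2 LIMSEQ_unique by simp
  qed
  have G2: "(fst p + fst q, snd p + snd q) \<in> G" if pq: "p \<in> G" "q \<in> G" for p q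
  proof -
    obtain s where s: "\<And>k. s k \<in> Gam J g g'" "s \<longlonglongrightarrow> p" using seq[OF pq(1)] by blast
    obtain t where t: "\<And>k. t k \<in> Gam J g g'" "t \<longlonglongrightarrow> q" using seq[OF pq(2)] by blast
    have "(\<lambda>k. (fst (s k) + fst (t k), snd (s k) + snd (t k))) \<longlonglongrightarrow> (fst p + fst q, snd p + snd q)"
      using s t by (intro tendsto_intros)
    moreover have "(fst (s k) + fst (t k), snd (s k) + snd (t k)) \<in> Gam J g g'" for k
      using s t by (intro Gam.add)
    ultimately show ?thesis by (intro inG) auto
  qed
  have G3: "(scaleC c (fst p), scaleC c (snd p)) \<in> G" if pq: "p \<in> G" for p c
  proof -
    obtain s where s: "\<And>k. s k \<in> Gam J g g'" "s \<longlonglongrightarrow> p" using seq[OF pq] by blast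
    have "(\<lambda>k. (scaleC c (fst (s k)), scaleC c (snd (s k)))) \<longlonglongrightarrow> (scaleC c (fst p), scaleC c (snd p))"
      using s by (intro tendsto_Pair tendsto_scaleC tendsto_fst tendsto_snd)
    moreover have "(scaleC c (fst (s k)), scaleC c (snd (s k))) \<in> Gam J g g'" for k
      using s by (intro Gam.smul)
    ultimately show ?thesis by (intro inG) auto
  qed
  have G0: "(g a, g' a) \<in> G" if "a \<in> J" for a
    using Gam.base[OF that] closure_subset unfolding G_def by blast
  have Gn: "norm x = norm y" if "(x, y) \<in> G" for x y
    by (rule norm_eq_cinner) (use G1[OF that that] in simp)
  have Gd: "(x - x', y - y') \<in> G" if "(x, y) \<in> G" "(x', y') \<in> G" for x y x' y'
  proof -
    have m: "(scaleC (-1) x', scaleC (-1) y') \<in> G" using G3[OF that(2)] by simp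
    have "(x + scaleC (-1) x', y + scaleC (-1) y') \<in> G" using G2[OF that(1) m] by simp
    then show ?thesis by (simp add: scaleC_minus_left)
  qed
  have dom: "\<exists>y. (x, y) \<in> G" for x
  proof -
    define D where "D = fst ` G"
    have cl: "closed D"
    proof (rule closed_sequential_limits[THEN iffD2], intro allI impI, elim conjE)
      fix s l assume s: "\<forall>k. s k \<in> D" and lim: "s \<longlonglongrightarrow> l"
      have "\<exists>y. (s k, y) \<in> G" for k
      proof -
        obtain p where "p \<in> G" "s k = fst p" using s unfolding D_def by blast
        then show ?thesis by (cases p) auto
      qed
      then obtain t where t: "\<And>k. (s k, t k) \<in> G" by metis
      have "Cauchy s" using lim by (rule LIMSEQ_imp_Cauchy)
      moreover have "dist (t a) (t b) = dist (s a) (s b)" for a b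
        using Gn[OF Gd[OF t[of a] t[of b]]] by (simp add: dist_norm)
      ultimately have "Cauchy t" unfolding Cauchy_def by simp
      then obtain u where u: "t \<longlonglongrightarrow> u" using Cauchy_convergent_iff convergent_def by blast
      have "(\<lambda>k. (s k, t k)) \<longlonglongrightarrow> (l, u)" using lim u by (rule tendsto_Pair)
      then have "(l, u) \<in> G" by (rule closed_sequentially[OF Gcl t])
      then show "l \<in> D" unfolding D_def by (rule image_eqI[rotated]) simp
    qed
    have cs: "csub D"
      unfolding csub_def
    proof (intro conjI ballI allI)
      fix x y assume "x \<in> D" "y \<in> D"
      then obtain p q where pq: "p \<in> G" "q \<in> G" "x = fst p" "y = fst q" unfolding D_def by blast
      show "x + y \<in> D" unfolding D_def by (rule image_eqI[OF _ G2[OF pq(1,2)]]) (simp add: pq)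
    next
      fix c x assume "x \<in> D"
      then obtain p where p: "p \<in> G" "x = fst p" unfolding D_def by blast
      show "scaleC c x \<in> D" unfolding D_def by (rule image_eqI[OF _ G3[OF p(1)]]) (simp add: p)
    qed
    have sub: "g ` J \<subseteq> D"
    proof
      fix x assume "x \<in> g ` J"
      then obtain a where a: "a \<in> J" "x = g a" by blast
      show "x \<in> D" unfolding D_def by (rule image_eqI[OF _ G0[OF a(1)]]) (simp add: a)
    qed
    have "x \<in> D" using cspan_cl_min[OF sub cl cs] d1 by blast
    then obtain p where "p \<in> G" "x = fst p" unfolding D_def by blast
    then show ?thesis by (cases p) auto
  qed
  have rng: "\<exists>x. (x, y) \<in> G" for y
  proof -
    define D where "D = snd ` G"
    have cl: "closed D"
    proof (rule closed_sequential_limits[THEN iffD2], intro allI impI, elim conjE)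
      fix s l assume s: "\<forall>k. s k \<in> D" and lim: "s \<longlonglongrightarrow> l"
      have "\<exists>y. (y, s k) \<in> G" for k
      proof -
        obtain p where "p \<in> G" "s k = snd p" using s unfolding D_def by blast
        then show ?thesis by (cases p) auto
      qed
      then obtain t where t: "\<And>k. (t k, s k) \<in> G" by metis
      have "Cauchy s" using lim by (rule LIMSEQ_imp_Cauchy)
      moreover have "dist (t a) (t b) = dist (s a) (s b)" for a b
        using Gn[OF Gd[OF t[of a] t[of b]]] by (simp add: dist_norm)
      ultimately have "Cauchy t" unfolding Cauchy_def by simp
      then obtain u where u: "t \<longlonglongrightarrow> u" using Cauchy_convergent_iff convergent_def by blast
      have "(\<lambda>k. (t k, s k)) \<longlonglongrightarrow> (u, l)" using u lim by (rule tendsto_Pair)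
      then have "(u, l) \<in> G" by (rule closed_sequentially[OF Gcl t])
      then show "l \<in> D" unfolding D_def by (rule image_eqI[rotated]) simp
    qed
    have cs: "csub D"
      unfolding csub_def
    proof (intro conjI ballI allI)
      fix x y assume "x \<in> D" "y \<in> D"
      then obtain p q where pq: "p \<in> G" "q \<in> G" "x = snd p" "y = snd q" unfolding D_def by blast
      show "x + y \<in> D" unfolding D_def by (rule image_eqI[OF _ G2[OF pq(1,2)]]) (simp add: pq)
    next
      fix c x assume "x \<in> D"
      then obtain p where p: "p \<in> G" "x = snd p" unfolding D_def by blast
      show "scaleC c x \<in> D" unfolding D_def by (rule image_eqI[OF _ G3[OF p(1)]]) (simp add: p)
    qed
    have sub: "g' ` J \<subseteq> D"
    proof
      fix x assume "x \<in> g' ` J"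
      then obtain a where a: "a \<in> J" "x = g' a" by blast
      show "x \<in> D" unfolding D_def by (rule image_eqI[OF _ G0[OF a(1)]]) (simp add: a)
    qed
    have "y \<in> D" using cspan_cl_min[OF sub cl cs] d2 by blast
    then obtain p where "p \<in> G" "y = snd p" unfolding D_def by blast
    then show ?thesis by (cases p) auto
  qed
  have uniq: "y = y'" if "(x, y) \<in> G" "(x, y') \<in> G" for x y y'
    using Gn[OF Gd[OF that]] by simp
  define \<phi> where "\<phi> x = (THE y. (x, y) \<in> G)" for x
  have phiG: "(x, \<phi> x) \<in> G" for x
  proof -
    have "\<exists>!y. (x, y) \<in> G" using dom[of x] uniq by blast
    then show ?thesis unfolding \<phi>_def by (rule theI')
  qed
  have phi_eq: "\<phi> x = y" if "(x, y) \<in> G" for x y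
    using uniq[OF phiG that] .
  show ?thesis
  proof
    show "bij \<phi>"
    proof (rule bijI)
      show "inj \<phi>"
      proof (rule injI)
        fix x x' assume "\<phi> x = \<phi> x'"
        then have "(x - x', 0) \<in> G" using Gd[OF phiG[of x] phiG[of x']] by simp
        then show "x = x'" using Gn by fastforce
      qed
      show "surj \<phi>"
        unfolding surj_def
      proof
        fix y
        obtain x where "(x, y) \<in> G" using rng[of y] by blast
        then have "\<phi> x = y" by (rule phi_eq)
        then show "\<exists>x. y = \<phi> x" by auto
      qed
    qed
    show "\<phi> (x + y) = \<phi> x + \<phi> y" for x y
      using G2[OF phiG[of x] phiG[of y]] phi_eq by simp
    show "\<phi> (scaleC c x) = scaleC c (\<phi> x)" for c x
      using G3[OF phiG[of x]] phi_eq by simp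
    show "cinner (\<phi> x) (\<phi> y) = cinner x y" for x y
      using G1[OF phiG[of x] phiG[of y]] by simp
    show "\<phi> (g a) = g' a" if "a \<in> J" for a
      using phi_eq[OF G0[OF that]] .
  qed
qed

lemma intertwine_ext:
  fixes \<phi> :: "'a::complex_hilbert_space \<Rightarrow> 'b::complex_hilbert_space"
  assumes add: "\<And>x y. \<phi> (x + y) = \<phi> x + \<phi> y" and sc: "\<And>c x. \<phi> (scaleC c x) = scaleC c (\<phi> x)"
    and inn: "\<And>x y. cinner (\<phi> x) (\<phi> y) = cinner x y"
    and T: "isometry_op T" and T': "isometry_op T'"
    and S: "cspan_cl S = UNIV" and gen: "\<And>x. x \<in> S \<Longrightarrow> \<phi> (T x) = T' (\<phi> x)"
  shows "\<phi> (T x) = T' (\<phi> x)"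
proof -
  have lin: "clinear_op \<phi>" using add sc by (simp add: clinear_op_def)
  have nn: "norm (\<phi> x) = norm x" for x by (rule norm_eq_cinner) (simp add: inn)
  have bl: "bounded_linear \<phi>"
    by (rule clinear_bounded[OF lin, where K=1]) (simp add: nn)
  define M where "M = {x. \<phi> (T x) = T' (\<phi> x)}"
  have "closed M"
    unfolding M_def
    by (intro closed_Collect_eq continuous_on_compose2[OF linear_continuous_on[OF bl] isometry_cont[OF T]]
        continuous_on_compose2[OF isometry_cont[OF T'] linear_continuous_on[OF bl]]) auto
  moreover have "csub M"
    unfolding M_def csub_def
    by (simp add: clinear_add[OF isometry_clinear[OF T]] clinear_add[OF isometry_clinear[OF T']]
        clinear_scaleC[OF isometry_clinear[OF T]] clinear_scaleC[OF isometry_clinear[OF T']] add sc)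
  moreover have "S \<subseteq> M" using gen by (auto simp: M_def)
  ultimately have "UNIV \<subseteq> M" using cspan_cl_min S by blast
  then show ?thesis by (auto simp: M_def)
qed


theorem theorem5p2:
  fixes n :: nat
    and z :: "nat \<Rightarrow> nat \<Rightarrow> complex"
    and V :: "nat \<Rightarrow> 'a::complex_hilbert_space \<Rightarrow> 'a"
    and V' :: "nat \<Rightarrow> 'b::complex_hilbert_space \<Rightarrow> 'b"
  assumes "n \<ge> 1"
    and "\<forall>i\<in>{1..n}. \<forall>j\<in>{1..n}. i \<noteq> j \<longrightarrow> cmod (z i j) = 1 \<and> z j i = cnj (z i j)"
    and "doubly_noncommuting n z V"
    and "doubly_noncommuting n z V'"
  shows "unitarily_equivalent (UNIV :: 'a set) (UNIV :: 'b set) {1..n} V V' \<longleftrightarrow>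
         (\<forall>A. A \<subseteq> {1..n} \<longrightarrow>
            unitarily_equivalent (wandering_subspace n V A) (wandering_subspace n V' A)
              (wandering_index n A) (wandering_data V) (wandering_data V'))"
proof -
  interpret A: dnc n z V using assms(2,3) by unfold_locales
  interpret B: dnc n z V' using assms(2,4) by unfold_locales
  show ?thesis
  proof
    assume "unitarily_equivalent (UNIV :: 'a set) (UNIV :: 'b set) {1..n} V V'"
    then obtain \<phi> :: "'a \<Rightarrow> 'b" where bij: "bij \<phi>"
      and add: "\<And>x y. \<phi> (x + y) = \<phi> x + \<phi> y"
      and sc: "\<And>c x. \<phi> (scaleC c x) = scaleC c (\<phi> x)"
      and inn: "\<And>x y. cinner (\<phi> x) (\<phi> y) = cinner x y"
      and intw: "\<And>k x. k \<in> {1..n} \<Longrightarrow> \<phi> (V k x) = V' k (\<phi> x)"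
      unfolding unitarily_equivalent_def by auto
    have inj: "inj \<phi>" and surj: "surj \<phi>" using bij by (auto simp: bij_def)
    have phi0: "\<phi> 0 = 0" using add[of 0 0] by simp
    have adj: "\<phi> (A.Vs i x) = B.Vs i (\<phi> x)" if i: "i \<in> {1..n}" for i x
    proof (rule cinner_ext)
      fix u
      obtain u0 where u0: "u = \<phi> u0" using surjD[OF surj, of u] by blast
      have "cinner u (\<phi> (A.Vs i x)) = cinner u0 (A.Vs i x)" by (simp add: u0 inn)
      also have "\<dots> = cinner (V i u0) x" by (simp add: cadjoint_iso[OF A.iso[OF i]])
      also have "\<dots> = cinner (\<phi> (V i u0)) (\<phi> x)" by (simp add: inn)
      also have "\<dots> = cinner u (B.Vs i (\<phi> x))" by (simp add: intw[OF i] u0 cadjoint_iso[OF B.iso[OF i]])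
      finally show "cinner u (\<phi> (A.Vs i x)) = cinner u (B.Vs i (\<phi> x))" .
    qed
    have pw: "\<phi> ((V j ^^ r) y) = (V' j ^^ r) (\<phi> y)" if j: "j \<in> {1..n}" for j r y
      by (induction r) (simp_all add: intw[OF j])
    have memX: "w \<in> A.X {1..n} A \<longleftrightarrow> \<phi> w \<in> B.X {1..n} A" if A: "A \<subseteq> {1..n}" for A w
    proof -
      have k: "A.Vs i w = 0 \<longleftrightarrow> B.Vs i (\<phi> w) = 0" if "i \<in> A" for i
      proof -
        have "i \<in> {1..n}" using that A by auto
        then have e: "B.Vs i (\<phi> w) = \<phi> (A.Vs i w)" by (simp add: adj)
        have "\<phi> (A.Vs i w) = \<phi> 0 \<longleftrightarrow> A.Vs i w = 0" using inj by (simp add: inj_eq)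
        then show ?thesis unfolding e phi0 by simp
      qed
      have r: "w \<in> range (V j ^^ r) \<longleftrightarrow> \<phi> w \<in> range (V' j ^^ r)" if j: "j \<in> {1..n}" for j r
      proof
        assume "w \<in> range (V j ^^ r)"
        then obtain y where "w = (V j ^^ r) y" by blast
        then show "\<phi> w \<in> range (V' j ^^ r)" by (simp add: pw[OF j])
      next
        assume "\<phi> w \<in> range (V' j ^^ r)"
        then obtain y' where y': "\<phi> w = (V' j ^^ r) y'" by blast
        obtain y where y: "y' = \<phi> y" using surjD[OF surj, of y'] by blast
        have "\<phi> w = \<phi> ((V j ^^ r) y)" by (simp add: y' y pw[OF j])
        then have "w = (V j ^^ r) y" using inj by (simp add: inj_eq)
        then show "w \<in> range (V j ^^ r)" by simp
      qed
      have e1: "(\<forall>i\<in>A. A.Vs i w = 0) \<longleftrightarrow> (\<forall>i\<in>A. B.Vs i (\<phi> w) = 0)" using k by blast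
      have e2: "(\<forall>j\<in>{1..n} - A. \<forall>r. w \<in> range (V j ^^ r)) \<longleftrightarrow> (\<forall>j\<in>{1..n} - A. \<forall>r. \<phi> w \<in> range (V' j ^^ r))"
        using r by blast
      show ?thesis unfolding A.X_def B.X_def mem_Collect_eq e1 e2 ..
    qed
    show "\<forall>A. A \<subseteq> {1..n} \<longrightarrow> unitarily_equivalent (wandering_subspace n V A) (wandering_subspace n V' A)
              (wandering_index n A) (wandering_data V) (wandering_data V')"
    proof (intro allI impI)
      fix A assume A: "A \<subseteq> {1..n}"
      have W: "wandering_subspace n V A = A.X {1..n} A" "wandering_subspace n V' A = B.X {1..n} A"
        using A.wandering_eq[OF A] B.wandering_eq[OF A] by auto
      have bb: "bij_betw \<phi> (A.X {1..n} A) (B.X {1..n} A)"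
        unfolding bij_betw_def
      proof
        show "inj_on \<phi> (A.X {1..n} A)" using inj by (rule inj_on_subset) simp
        show "\<phi> ` A.X {1..n} A = B.X {1..n} A"
        proof (rule set_eqI)
          fix y
          obtain x where x: "y = \<phi> x" using surjD[OF surj, of y] by blast
          have "\<phi> x \<in> \<phi> ` A.X {1..n} A \<longleftrightarrow> x \<in> A.X {1..n} A" by (rule inj_image_mem_iff[OF inj])
          also have "\<dots> \<longleftrightarrow> \<phi> x \<in> B.X {1..n} A" by (rule memX[OF A])
          finally show "y \<in> \<phi> ` A.X {1..n} A \<longleftrightarrow> y \<in> B.X {1..n} A" unfolding x .
        qed
      qed
      show "unitarily_equivalent (wandering_subspace n V A) (wandering_subspace n V' A)
              (wandering_index n A) (wandering_data V) (wandering_data V')"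
        unfolding unitarily_equivalent_def W
      proof (intro exI[of _ \<phi>] conjI bb ballI allI)
        fix k x assume k: "k \<in> wandering_index n A"
        show "\<phi> (wandering_data V k x) = wandering_data V' k (\<phi> x)"
        proof (cases k)
          case None then show ?thesis by (simp add: wandering_data_def)
        next
          case (Some j)
          then have "j \<in> {1..n}" using k by (auto simp: wandering_index_def)
          then show ?thesis using Some by (simp add: wandering_data_def intw)
        qed
      next
        fix x y show "\<phi> (x + y) = \<phi> x + \<phi> y" by (rule add)
      next
        fix c x show "\<phi> (scaleC c x) = scaleC c (\<phi> x)" by (rule sc)
      next
        fix x y show "cinner (\<phi> x) (\<phi> y) = cinner x y" by (rule inn)
      qed
    qed
  next
    assume H: "\<forall>A. A \<subseteq> {1..n} \<longrightarrow> unitarily_equivalent (wandering_subspace n V A) (wandering_subspace n V' A)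
              (wandering_index n A) (wandering_data V) (wandering_data V')"
    define Pr where "Pr A \<Phi> \<longleftrightarrow> bij_betw \<Phi> (A.X {1..n} A) (B.X {1..n} A) \<and>
        (\<forall>x\<in>A.X {1..n} A. \<forall>y\<in>A.X {1..n} A. cinner (\<Phi> x) (\<Phi> y) = cinner x y) \<and>
        (\<forall>j\<in>{1..n} - A. \<forall>x\<in>A.X {1..n} A. \<Phi> (V j x) = V' j (\<Phi> x))" for A \<Phi>
    have ex: "\<exists>\<Phi>. A \<subseteq> {1..n} \<longrightarrow> Pr A \<Phi>" for A
    proof (cases "A \<subseteq> {1..n}")
      case False then show ?thesis by blast
    next
      case True
      have W: "wandering_subspace n V A = A.X {1..n} A" "wandering_subspace n V' A = B.X {1..n} A"
        using A.wandering_eq[OF True] B.wandering_eq[OF True] by auto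
      have "unitarily_equivalent (wandering_subspace n V A) (wandering_subspace n V' A) (wandering_index n A) (wandering_data V) (wandering_data V')"
        using H True by blast
      then have "unitarily_equivalent (A.X {1..n} A) (B.X {1..n} A) (wandering_index n A) (wandering_data V) (wandering_data V')"
        unfolding W .
      then obtain \<phi> where p1: "bij_betw \<phi> (A.X {1..n} A) (B.X {1..n} A)"
        and p2: "\<forall>x\<in>A.X {1..n} A. \<forall>y\<in>A.X {1..n} A. cinner (\<phi> x) (\<phi> y) = cinner x y"
        and p3: "\<forall>k\<in>wandering_index n A. \<forall>x\<in>A.X {1..n} A. \<phi> (wandering_data V k x) = wandering_data V' k (\<phi> x)"
        unfolding unitarily_equivalent_def by blast
      have "\<forall>j\<in>{1..n} - A. \<forall>x\<in>A.X {1..n} A. \<phi> (V j x) = V' j (\<phi> x)"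
      proof (intro ballI)
        fix j x assume j: "j \<in> {1..n} - A" and x: "x \<in> A.X {1..n} A"
        have "Some j \<in> wandering_index n A" using j by (simp add: wandering_index_def)
        then have "\<phi> (wandering_data V (Some j) x) = wandering_data V' (Some j) (\<phi> x)" using p3 x by blast
        then show "\<phi> (V j x) = V' j (\<phi> x)" by (simp add: wandering_data_def)
      qed
      then have "Pr A \<phi>" using p1 p2 unfolding Pr_def by blast
      then show ?thesis by blast
    qed
    obtain \<Phi> where \<Phi>P: "\<forall>A. A \<subseteq> {1..n} \<longrightarrow> Pr A (\<Phi> A)"
      using choice[of "\<lambda>A \<Phi>. A \<subseteq> {1..n} \<longrightarrow> Pr A \<Phi>"] ex by blast
    have \<Phi>: "bij_betw (\<Phi> A) (A.X {1..n} A) (B.X {1..n} A) \<and>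
        (\<forall>x\<in>A.X {1..n} A. \<forall>y\<in>A.X {1..n} A. cinner (\<Phi> A x) (\<Phi> A y) = cinner x y) \<and>
        (\<forall>j\<in>{1..n} - A. \<forall>x\<in>A.X {1..n} A. \<Phi> A (V j x) = V' j (\<Phi> A x))" if "A \<subseteq> {1..n}" for A
      using \<Phi>P that unfolding Pr_def by blast
    have \<Phi>X: "\<Phi> A w \<in> B.X {1..n} A" if "A \<subseteq> {1..n}" "w \<in> A.X {1..n} A" for A w
      using \<Phi>[OF that(1)] that(2) by (auto simp: bij_betw_def)
    define J where "J = {(A, ls, w). A \<subseteq> {1..n} \<and> set ls \<subseteq> A \<and> w \<in> A.X {1..n} A}"
    define g where "g = (\<lambda>(A :: nat set, ls, w). wapp V ls w)"
    define g' where "g' = (\<lambda>(A, ls, w). wapp V' ls (\<Phi> A w))"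
    have gram: "cinner (g a) (g b) = cinner (g' a) (g' b)" if ab: "a \<in> J" "b \<in> J" for a b
    proof -
      obtain A ls w where a: "a = (A, ls, w)" "A \<subseteq> {1..n}" "set ls \<subseteq> A" "w \<in> A.X {1..n} A"
        using ab(1) unfolding J_def by blast
      obtain B ls' w' where b: "b = (B, ls', w')" "B \<subseteq> {1..n}" "set ls' \<subseteq> B" "w' \<in> A.X {1..n} B"
        using ab(2) unfolding J_def by blast
      have e1: "cinner (g a) (g b) = (if A = B \<and> mset ls = mset ls' then fst (nf z ls) * cnj (fst (nf z ls')) * cinner w w' else 0)"
        unfolding g_def a(1) b(1) using A.gram[OF a(2) b(2) a(4) b(4) a(3) b(3)] by simp
      have e2: "cinner (g' a) (g' b) = (if A = B \<and> mset ls = mset ls' then fst (nf z ls) * cnj (fst (nf z ls')) * cinner (\<Phi> A w) (\<Phi> B w') else 0)"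
        unfolding g'_def a(1) b(1) using B.gram[OF a(2) b(2) \<Phi>X[OF a(2,4)] \<Phi>X[OF b(2,4)] a(3) b(3)] by simp
      show ?thesis
      proof (cases "A = B \<and> mset ls = mset ls'")
        case True
        then have "cinner (\<Phi> A w) (\<Phi> B w') = cinner w w'" using \<Phi>[OF a(2)] a(4) b(4) by auto
        then show ?thesis using e1 e2 True by simp
      next
        case False
        have "cinner (g a) (g b) = 0" using e1 False by (simp only: if_False)
        moreover have "cinner (g' a) (g' b) = 0" using e2 False by (simp only: if_False)
        ultimately show ?thesis by simp
      qed
    qed
    have d1: "cspan_cl (g ` J) = UNIV"
    proof -
      have "A.gen {1..n} \<subseteq> g ` J"
      proof
        fix x assume "x \<in> A.gen {1..n}"
        then obtain A ls y where h: "x = wapp V ls y" "A \<subseteq> {1..n}" "set ls \<subseteq> A" "y \<in> A.X {1..n} A"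
          unfolding A.gen_def by blast
        then have "(A, ls, y) \<in> J" by (simp add: J_def)
        moreover have "x = g (A, ls, y)" by (simp add: g_def h(1))
        ultimately show "x \<in> g ` J" by blast
      qed
      then show ?thesis using cspan_cl_mono[of "A.gen {1..n}" "g ` J"] A.dense by auto
    qed
    have d2: "cspan_cl (g' ` J) = UNIV"
    proof -
      have "B.gen {1..n} \<subseteq> g' ` J"
      proof
        fix x assume "x \<in> B.gen {1..n}"
        then obtain A ls y where h: "x = wapp V' ls y" "A \<subseteq> {1..n}" "set ls \<subseteq> A" "y \<in> B.X {1..n} A"
          unfolding B.gen_def by blast
        have "y \<in> \<Phi> A ` A.X {1..n} A" using \<Phi>[OF h(2)] h(4) by (auto simp: bij_betw_def)
        then obtain w where w: "w \<in> A.X {1..n} A" "y = \<Phi> A w" by blast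
        then have "(A, ls, w) \<in> J" using h by (simp add: J_def)
        moreover have "x = g' (A, ls, w)" by (simp add: g'_def h(1) w(2))
        ultimately show "x \<in> g' ` J" by blast
      qed
      then show ?thesis using cspan_cl_mono[of "B.gen {1..n}" "g' ` J"] B.dense by auto
    qed
    obtain \<phi> where bij: "bij \<phi>" and add: "\<And>x y. \<phi> (x + y) = \<phi> x + \<phi> y"
      and sc: "\<And>c x. \<phi> (scaleC c x) = scaleC c (\<phi> x)" and inn: "\<And>x y. cinner (\<phi> x) (\<phi> y) = cinner x y"
      and gg: "\<And>a. a \<in> J \<Longrightarrow> \<phi> (g a) = g' a"
      using ext_unitary[of J g g', OF gram d1 d2] by blast
    have intw: "\<phi> (V j x) = V' j (\<phi> x)" if j: "j \<in> {1..n}" for j x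
    proof (rule intertwine_ext[OF add sc inn A.iso[OF j] B.iso[OF j] d1])
      fix x assume "x \<in> g ` J"
      then obtain A ls w where a: "A \<subseteq> {1..n}" "set ls \<subseteq> A" "w \<in> A.X {1..n} A" and x: "x = wapp V ls w"
        unfolding J_def g_def by auto
      have aJ: "(A, ls, w) \<in> J" using a by (simp add: J_def)
      have phx: "\<phi> x = wapp V' ls (\<Phi> A w)" using gg[OF aJ] by (simp add: g_def g'_def x)
      show "\<phi> (V j x) = V' j (\<phi> x)"
      proof (cases "j \<in> A")
        case True
        have "(A, j # ls, w) \<in> J" using a True by (simp add: J_def)
        then have "\<phi> (g (A, j # ls, w)) = g' (A, j # ls, w)" by (rule gg)
        then show ?thesis unfolding phx by (simp add: g_def g'_def x)
      next
        case False
        have lsI: "set ls \<subseteq> {1..n}" using a by auto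
        have jl: "j \<notin> set ls" using a False by auto
        have Vw: "V j w \<in> A.X {1..n} A" using A.V_pres_X[OF j False _ a(1) a(3)] by simp
        have aJ': "(A, ls, V j w) \<in> J" using a Vw by (simp add: J_def)
        have "V j x = scaleC (cw z j ls) (g (A, ls, V j w))"
          unfolding x g_def using A.wapp_commute[OF j lsI jl] by simp
        then have "\<phi> (V j x) = scaleC (cw z j ls) (g' (A, ls, V j w))" by (simp add: sc gg[OF aJ'])
        also have "\<dots> = scaleC (cw z j ls) (wapp V' ls (V' j (\<Phi> A w)))"
          using \<Phi>[OF a(1)] j False a(3) by (simp add: g'_def)
        also have "\<dots> = V' j (\<phi> x)"
          unfolding phx using B.wapp_commute[OF j lsI jl] by simp
        finally show ?thesis .
      qed
    qed
    show "unitarily_equivalent (UNIV :: 'a set) (UNIV :: 'b set) {1..n} V V'"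
      unfolding unitarily_equivalent_def
      using bij add sc inn intw by blast
  qed
qed


end
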